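(* Let $a_1\ge1$ be an integer, $\bm{x} \in \mathcal{L}(f)$, let $p$ be a prime not dividing $2(x_1^2 - a_1x_1x_0 - x_0^2)D$, let $\mathfrak{p}$ be a prime ideal of $\mathcal{O}_K$ lying over $p$, and let $v \ge 1$ be an integer. Then $\tau(\bm{x}; p^v) = 2\operatorname{ord}_{\mathfrak{p}^v}(\alpha^2)$.
   Context: Let $f := X^2 - a_1X - 1$, $D := a_1^2+4$, $K := \mathbb{Q}(\sqrt{D})$ with ring of integers $\mathcal{O}_K$, and $\alpha,\beta\in\mathcal{O}_K$ the roots of $f$ ($\alpha\beta=-1$). $\mathcal{L}(f)$ is the set of integer sequences $\bm{x}=(x_n)_{n\ge0}$ with $x_{n+2} = a_1x_{n+1} + x_n$ for all $n\ge0$. For an integer $m\ge1$, $\tau(\bm{x}; m)$ is the minimal integer $t \ge 1$ with $x_{n+t}\equiv x_n \pmod m$ for all sufficiently large $n$. $\operatorname{ord}_{\mathfrak{i}}(\theta)$ denotes the multiplicative order of $\theta$ modulo the ideal $\mathfrak{i}$. *)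

theory Defs
  imports Complex_Main "HOL-Computational_Algebra.Polynomial" "HOL-Number_Theory.Number_Theory"
begin

text \<open>Setting: f = X^2 - a1 X - 1, D = a1^2 + 4, K = Q(sqrt D), realised inside the reals.\<close>

definition discr :: "int \<Rightarrow> int" where
  "discr a1 = a1^2 + 4"

definition Kfield :: "int \<Rightarrow> real set" where
  "Kfield a1 = {of_rat r + of_rat s * sqrt (real_of_int (discr a1)) | r s. True}"

definition algebraic_integer :: "real \<Rightarrow> bool" where
  "algebraic_integer x \<longleftrightarrow> (\<exists>q :: int poly. lead_coeff q = 1 \<and> poly (map_poly of_int q) x = 0)"

definition OK :: "int \<Rightarrow> real set" where
  "OK a1 = {x \<in> Kfield a1. algebraic_integer x}"

definition is_ideal :: "int \<Rightarrow> real set \<Rightarrow> bool" where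
  "is_ideal a1 I \<longleftrightarrow> I \<subseteq> OK a1 \<and> 0 \<in> I \<and> (\<forall>x\<in>I. \<forall>y\<in>I. x + y \<in> I)
     \<and> (\<forall>x\<in>I. - x \<in> I) \<and> (\<forall>r\<in>OK a1. \<forall>x\<in>I. r * x \<in> I)"

definition is_prime_ideal :: "int \<Rightarrow> real set \<Rightarrow> bool" where
  "is_prime_ideal a1 P \<longleftrightarrow> is_ideal a1 P \<and> P \<noteq> OK a1
     \<and> (\<forall>a\<in>OK a1. \<forall>b\<in>OK a1. a * b \<in> P \<longrightarrow> a \<in> P \<or> b \<in> P)"

definition lies_over :: "real set \<Rightarrow> nat \<Rightarrow> bool" where
  "lies_over P p \<longleftrightarrow> {n :: int. real_of_int n \<in> P} = {n. int p dvd n}"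

definition gen_ideal :: "int \<Rightarrow> real set \<Rightarrow> real set" where
  "gen_ideal a1 S = \<Inter>{J. is_ideal a1 J \<and> S \<subseteq> J}"

definition ideal_mult :: "int \<Rightarrow> real set \<Rightarrow> real set \<Rightarrow> real set" where
  "ideal_mult a1 I J = gen_ideal a1 {x * y | x y. x \<in> I \<and> y \<in> J}"

primrec ideal_pow :: "int \<Rightarrow> real set \<Rightarrow> nat \<Rightarrow> real set" where
  "ideal_pow a1 I 0 = OK a1"
| "ideal_pow a1 I (Suc n) = ideal_mult a1 I (ideal_pow a1 I n)"

definition ord_ideal :: "real set \<Rightarrow> real \<Rightarrow> nat" where
  "ord_ideal I \<theta> = (LEAST t :: nat. t \<ge> 1 \<and> \<theta> ^ t - 1 \<in> I)"

definition Lf :: "int \<Rightarrow> (nat \<Rightarrow> int) set" where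
  "Lf a1 = {x. \<forall>n. x (n + 2) = a1 * x (n + 1) + x n}"

definition tau :: "(nat \<Rightarrow> int) \<Rightarrow> int \<Rightarrow> nat" where
  "tau x m = (LEAST t :: nat. t \<ge> 1 \<and> (\<exists>N. \<forall>n\<ge>N. [x (n + t) = x n] (mod m)))"

end

theory Submission
  imports Defs
begin



lemma map_poly_of_int_mult:
  "map_poly (of_int :: int \<Rightarrow> 'a::comm_ring_1) (p * q) = map_poly of_int p * map_poly of_int q"
  by (rule poly_eqI) (simp add: coeff_map_poly coeff_mult)

lemma map_poly_of_int_smult:
  "map_poly (of_int :: int \<Rightarrow> 'a::comm_ring_1) (Polynomial.smult c p) = Polynomial.smult (of_int c) (map_poly of_int p)"
  by (rule poly_eqI) (simp add: coeff_map_poly)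

lemma map_poly_of_int_inj:
  assumes "map_poly (of_int :: int \<Rightarrow> 'a::{comm_ring_1,ring_char_0}) p = map_poly of_int q"
  shows "p = q"
proof (rule poly_eqI)
  fix n
  have "(of_int (Polynomial.coeff p n) :: 'a) = of_int (Polynomial.coeff q n)"
    using arg_cong[OF assms, of "\<lambda>p. Polynomial.coeff p n"] by (simp add: coeff_map_poly)
  then show "Polynomial.coeff p n = Polynomial.coeff q n" by simp
qed

lemma common_denom_rat_poly:
  fixes h :: "rat poly"
  shows "\<exists>d::int. d > 0 \<and> (\<forall>i. of_int d * Polynomial.coeff h i \<in> \<int>)"
proof (induction h)
  case (pCons a h)
  then obtain d where d: "d > 0" "\<forall>i. of_int d * Polynomial.coeff h i \<in> \<int>" by blast
  obtain n b where nb: "quotient_of a = (n, b)" by force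
  have b: "b > 0" using quotient_of_denom_pos[OF nb] .
  have a: "a = of_int n / of_int b" using quotient_of_div[OF nb] .
  show ?case
  proof (intro exI conjI allI)
    show "d * b > 0" using d b by simp
    fix i show "of_int (d * b) * Polynomial.coeff (pCons a h) i \<in> \<int>"
    proof (cases i)
      case 0
      have "of_int (d * b) * a = of_int (d * n)" using a b by (simp add: field_simps)
      then show ?thesis using 0 by (metis Ints_of_int coeff_pCons_0)
    next
      case (Suc j)
      have "of_int (d * b) * Polynomial.coeff h j = of_int b * (of_int d * Polynomial.coeff h j)" by simp
      moreover have "of_int b * (of_int d * Polynomial.coeff h j) \<in> \<int>" using d(2) by simp
      ultimately have "of_int (d * b) * Polynomial.coeff h j \<in> \<int>" by argo
      then show ?thesis using Suc by (simp only: coeff_pCons_Suc)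
    qed
  qed
qed (rule exI[of _ 1], simp)

lemma int_poly_of_denom:
  fixes h :: "rat poly"
  shows "\<exists>d::int. \<exists>H::int poly. d > 0 \<and> map_poly of_int H = Polynomial.smult (of_int d) h"
proof -
  obtain d where d: "d > 0" "\<forall>i. of_int d * Polynomial.coeff h i \<in> \<int>"
    using common_denom_rat_poly by blast
  define H where "H = map_poly floor (Polynomial.smult (of_int d) h)"
  have "map_poly of_int H = Polynomial.smult (of_int d) h"
  proof (rule poly_eqI)
    fix n
    have "of_int \<lfloor>of_int d * Polynomial.coeff h n\<rfloor> = of_int d * Polynomial.coeff h n"
      using d(2) by (metis Ints_cases floor_of_int)
    then show "Polynomial.coeff (map_poly of_int H) n = Polynomial.coeff (Polynomial.smult (of_int d) h) n"
      unfolding H_def by (simp add: coeff_map_poly)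
  qed
  then show ?thesis using d by blast
qed

lemma content_monic_int:
  fixes q :: "int poly"
  assumes "lead_coeff q = 1"
  shows "content q = 1"
proof -
  have "content q dvd 1" using content_dvd_coeff[of q "degree q"] assms by simp
  then have "is_unit (content q)" by simp
  then show ?thesis using is_unit_content_iff by blast
qed

lemma gauss_monic:
  fixes q :: "int poly" and g h :: "rat poly"
  assumes q: "lead_coeff q = 1" and gh: "map_poly of_int q = g * h" and g: "lead_coeff g = 1"
  shows "Polynomial.coeff g i \<in> \<int>"
proof -
  obtain d G where dG: "d > 0" "map_poly of_int G = Polynomial.smult (of_int d) g"
    using int_poly_of_denom by blast
  obtain e H where eH: "e > 0" "map_poly of_int H = Polynomial.smult (of_int e) h"
    using int_poly_of_denom by blast
  have "map_poly (of_int :: int \<Rightarrow> rat) (G * H) = map_poly of_int G * map_poly of_int H"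
    by (rule map_poly_of_int_mult)
  also have "\<dots> = Polynomial.smult (of_int (d * e)) (g * h)" using dG eH by (simp add: mult.commute mult.left_commute)
  also have "\<dots> = map_poly of_int (Polynomial.smult (d * e) q)" using gh by (simp add: map_poly_of_int_smult)
  finally have GH: "G * H = Polynomial.smult (d * e) q"
    by (rule map_poly_of_int_inj)
  have cq: "content q = 1" using content_monic_int[OF q] .
  have c1: "content G * content H = d * e"
    using arg_cong[OF GH, of content] dG eH cq by (simp add: content_mult)
  have degG: "degree G = degree g"
    using arg_cong[OF dG(2), of degree] dG(1) by (simp add: degree_map_poly)
  have lG: "lead_coeff G = d"
  proof -
    have "of_int (lead_coeff G) = Polynomial.coeff (map_poly (of_int :: int \<Rightarrow> rat) G) (degree g)"
      using degG by (simp add: coeff_map_poly)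
    also have "\<dots> = of_int d" using dG(2) g by simp
    finally show ?thesis by simp
  qed
  have lh: "lead_coeff h = 1"
  proof -
    have "lead_coeff (map_poly (of_int :: int \<Rightarrow> rat) q) = 1" using q by (simp add: degree_map_poly coeff_map_poly)
    then show ?thesis using gh g by (simp add: lead_coeff_mult)
  qed
  have degH: "degree H = degree h"
    using arg_cong[OF eH(2), of degree] eH(1) by (simp add: degree_map_poly)
  have lH: "lead_coeff H = e"
  proof -
    have "of_int (lead_coeff H) = Polynomial.coeff (map_poly (of_int :: int \<Rightarrow> rat) H) (degree h)"
      using degH by (simp add: coeff_map_poly)
    also have "\<dots> = of_int e" using eH(2) lh by simp
    finally show ?thesis by simp
  qed
  have dvdG: "content G dvd d" using content_dvd_coeff[of G "degree G"] lG by simp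
  have dvdH: "content H dvd e" using content_dvd_coeff[of H "degree H"] lH by simp
  have pos: "content G \<ge> 0" "content H \<ge> 0"
    by (metis normalize_content abs_of_nonneg normalize_int_def abs_ge_zero)+
  have cG: "content G = d"
  proof -
    obtain k where k: "d = content G * k" using dvdG by blast
    obtain l where l: "e = content H * l" using dvdH by blast
    have "content G * content H * (k * l) = content G * content H"
      using c1 k l by (simp add: algebra_simps)
    moreover have "content G * content H \<noteq> 0" using c1 dG eH by simp
    ultimately have "k * l = 1" by simp
    then have "k = 1 \<or> k = -1" using zmult_eq_1_iff by blast
    then show ?thesis using k pos dG by auto
  qed
  have "d dvd Polynomial.coeff G i" using content_dvd_coeff[of G i] cG by simp
  then obtain m where m: "Polynomial.coeff G i = d * m" by blast
  have "of_int (Polynomial.coeff G i) = of_int d * Polynomial.coeff g i"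
    using arg_cong[OF dG(2), of "\<lambda>p. Polynomial.coeff p i"] by (simp add: coeff_map_poly)
  then have "of_int d * Polynomial.coeff g i = of_int d * of_int m" using m by (simp del: of_int_mult add: of_int_mult[symmetric])
  then have "Polynomial.coeff g i = of_int m" using dG by (metis mult_cancel_left of_int_0_eq_iff less_irrefl)
  then show ?thesis by simp
qed

lemma rational_root_int:
  fixes q :: "int poly" and x :: rat
  assumes q: "lead_coeff q = 1" and r: "poly (map_poly of_int q) x = 0"
  shows "x \<in> \<int>"
proof -
  obtain h where h: "map_poly of_int q = [:-x, 1:] * h"
    using r poly_eq_0_iff_dvd by blast
  have "Polynomial.coeff [:-x, 1:] 0 \<in> \<int>" by (rule gauss_monic[OF q h]) simp
  then have "- x \<in> \<int>" by simp
  then show ?thesis by (metis Ints_minus minus_minus)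
qed

lemma rat_sq_int:
  fixes x :: rat
  assumes "x^2 \<in> \<int>"
  shows "x \<in> \<int>"
proof -
  obtain n where n: "x^2 = of_int n" using assms Ints_cases by blast
  let ?q = "[:-n, 0, 1:] :: int poly"
  have "poly (map_poly of_int ?q) x = 0" using n by (simp add: power2_eq_square map_poly_pCons)
  then show ?thesis using rational_root_int[of ?q x] by simp
qed




lemma map_poly_of_rat_mult:
  "map_poly (of_rat :: rat \<Rightarrow> 'a::field_char_0) (p * q) = map_poly of_rat p * map_poly of_rat q"
  by (rule poly_eqI) (simp add: coeff_map_poly coeff_mult of_rat_sum of_rat_mult)

lemma map_poly_of_rat_add:
  "map_poly (of_rat :: rat \<Rightarrow> 'a::field_char_0) (p + q) = map_poly of_rat p + map_poly of_rat q"
  by (rule poly_eqI) (simp add: coeff_map_poly of_rat_add)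

lemma poly_int_rat_real:
  fixes q :: "int poly"
  shows "poly (map_poly real_of_int q) y = poly (map_poly (of_rat :: rat \<Rightarrow> real) (map_poly of_int q)) y"
proof -
  have "map_poly (of_rat :: rat \<Rightarrow> real) (map_poly of_int q) = map_poly (of_rat \<circ> of_int) q"
    by (rule map_poly_map_poly) simp_all
  also have "of_rat \<circ> of_int = (real_of_int)" by (rule ext) simp
  finally show ?thesis by simp
qed

lemma poly_of_rat_at_rat:
  fixes P :: "rat poly"
  shows "poly (map_poly (of_rat :: rat \<Rightarrow> real) P) (of_rat x) = of_rat (poly P x)"
  by (induction P) (simp_all add: map_poly_pCons of_rat_add of_rat_mult)

locale qf =
  fixes a1 :: int and \<alpha> :: real
  assumes a1pos: "a1 \<ge> 1" and root: "\<alpha>^2 - of_int a1 * \<alpha> - 1 = 0"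
begin

definition "\<beta> = of_int a1 - \<alpha>"

lemma alpha_sq: "\<alpha> * \<alpha> = of_int a1 * \<alpha> + 1"
  using root by (simp add: power2_eq_square algebra_simps)

lemma beta_sq: "\<beta> * \<beta> = of_int a1 * \<beta> + 1"
  using alpha_sq unfolding \<beta>_def by (simp add: algebra_simps)

lemma alpha_beta: "\<alpha> * \<beta> = -1"
  using alpha_sq unfolding \<beta>_def by (simp add: algebra_simps)

lemma w_sq: "(2 * \<alpha> - of_int a1)^2 = real_of_int (discr a1)"
  using alpha_sq unfolding discr_def by (simp add: power2_eq_square algebra_simps)

lemma D_pos: "discr a1 > 0" unfolding discr_def using zero_le_power2[of a1] by linarith

lemma w_nz: "2 * \<alpha> - of_int a1 \<noteq> 0"
  using w_sq D_pos by (metis of_int_0_less_iff power_zero_numeral less_irrefl)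

lemma alpha_irrat: "\<alpha> \<notin> \<rat>"
proof
  assume "\<alpha> \<in> \<rat>"
  then obtain x :: rat where x: "\<alpha> = of_rat x" by (metis Rats_cases)
  have "of_rat (x * x - of_int a1 * x - 1) = (0::real)"
    using alpha_sq x by (simp add: of_rat_add of_rat_mult of_rat_diff)
  then have e: "x * x - of_int a1 * x - 1 = 0" by simp
  let ?q = "[:-1, -a1, 1:] :: int poly"
  have "poly (map_poly of_int ?q) x = 0" using e by (simp add: map_poly_pCons algebra_simps)
  then have "x \<in> \<int>" using rational_root_int[of ?q x] by simp
  then obtain k where k: "x = of_int k" by (metis Ints_cases)
  have "of_int (k * (k - a1)) = (of_int 1 :: rat)" using e k by (simp add: algebra_simps)
  then have "k * (k - a1) = 1" by (simp only: of_int_eq_iff)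
  then have "(k = 1 \<and> k - a1 = 1) \<or> (k = -1 \<and> k - a1 = -1)" using zmult_eq_1_iff by blast
  then show False using a1pos by auto
qed

lemma lin_indep:
  fixes u v u' v' :: rat
  assumes "of_rat u + of_rat v * \<alpha> = of_rat u' + of_rat v' * \<alpha>"
  shows "u = u' \<and> v = v'"
proof -
  have v: "v = v'"
  proof (rule ccontr)
    assume "v \<noteq> v'"
    then have "\<alpha> = of_rat ((u' - u) / (v - v'))"
      using assms by (simp add: of_rat_divide of_rat_diff field_simps)
    then show False using alpha_irrat by (metis Rats_of_rat)
  qed
  then show ?thesis using assms by simp
qed

lemma Kfield_iff: "z \<in> Kfield a1 \<longleftrightarrow> (\<exists>u v :: rat. z = of_rat u + of_rat v * \<alpha>)"
proof -
  let ?w = "2 * \<alpha> - of_int a1"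
  have sq: "sqrt (real_of_int (discr a1)) = \<bar>?w\<bar>" using w_sq by (metis real_sqrt_abs)
  have "\<exists>e::rat. (e = 1 \<or> e = -1) \<and> sqrt (real_of_int (discr a1)) = of_rat e * ?w"
  proof (cases "?w \<ge> 0")
    case True then show ?thesis using sq by (intro exI[of _ 1]) simp
  next
    case False then show ?thesis using sq by (intro exI[of _ "-1"]) simp
  qed
  then obtain e :: rat where e: "e = 1 \<or> e = -1" "sqrt (real_of_int (discr a1)) = of_rat e * ?w"
    by blast
  have ee: "e * e = 1" using e(1) by auto
  show ?thesis
  proof
    assume "z \<in> Kfield a1"
    then obtain r s where z: "z = of_rat r + of_rat s * sqrt (real_of_int (discr a1))"
      unfolding Kfield_def by blast
    have "z = of_rat (r - s * e * of_int a1) + of_rat (2 * s * e) * \<alpha>"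
      using z e(2) by (simp add: of_rat_diff of_rat_mult algebra_simps)
    then show "\<exists>u v :: rat. z = of_rat u + of_rat v * \<alpha>" by blast
  next
    assume "\<exists>u v :: rat. z = of_rat u + of_rat v * \<alpha>"
    then obtain u v where z: "z = of_rat u + of_rat v * \<alpha>" by blast
    have "z = of_rat (u + v * of_int a1 / 2) + of_rat (v * e / 2) * sqrt (real_of_int (discr a1))"
    proof -
      have "of_rat (v * e / 2) * sqrt (real_of_int (discr a1)) = of_rat (v * e / 2) * (of_rat e * ?w)"
        by (subst e(2)) (rule refl)
      also have "\<dots> = of_rat v * of_rat (e * e) * ?w / 2"
        by (simp add: of_rat_mult of_rat_divide)
      also have "\<dots> = of_rat v * ?w / 2" using ee by simp
      finally have h: "of_rat (v * e / 2) * sqrt (real_of_int (discr a1)) = of_rat v * ?w / 2" .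
      show ?thesis unfolding h z by (simp add: of_rat_add of_rat_mult of_rat_divide field_simps)
    qed
    then show "z \<in> Kfield a1" unfolding Kfield_def by blast
  qed
qed


definition trc :: "rat \<Rightarrow> rat \<Rightarrow> rat" where "trc u v = 2 * u + of_int a1 * v"
definition nrm :: "rat \<Rightarrow> rat \<Rightarrow> rat" where "nrm u v = u * u + of_int a1 * u * v - v * v"
definition inOK :: "real \<Rightarrow> bool" where
  "inOK z \<longleftrightarrow> (\<exists>u v. z = of_rat u + of_rat v * \<alpha> \<and> trc u v \<in> \<int> \<and> nrm u v \<in> \<int>)"

lemma quad_zero:
  assumes "\<gamma> * \<gamma> = of_int a1 * \<gamma> + 1"
  shows "(of_rat u + of_rat v * \<gamma>) * (of_rat u + of_rat v * \<gamma>) - of_rat (trc u v) * (of_rat u + of_rat v * \<gamma>) + of_rat (nrm u v) = 0"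
proof -
  have "(of_rat u + of_rat v * \<gamma>) * (of_rat u + of_rat v * \<gamma>) - of_rat (trc u v) * (of_rat u + of_rat v * \<gamma>) + of_rat (nrm u v)
     = of_rat v * of_rat v * (\<gamma> * \<gamma> - of_int a1 * \<gamma> - 1)"
    unfolding trc_def nrm_def by (simp add: of_rat_add of_rat_mult of_rat_diff algebra_simps)
  then show ?thesis using assms by simp
qed

lemma conj_poly:
  fixes q :: "int poly"
  shows "\<exists>A B :: rat. \<forall>\<gamma>. \<gamma> * \<gamma> = of_int a1 * \<gamma> + 1 \<longrightarrow>
           poly (map_poly real_of_int q) (of_rat u + of_rat v * \<gamma>) = of_rat A + of_rat B * \<gamma>"
proof (induction q)
  case 0
  show ?case by (rule exI[of _ 0], rule exI[of _ 0]) simp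
next
  case (pCons c q)
  then obtain A B where AB: "\<forall>\<gamma>. \<gamma> * \<gamma> = of_int a1 * \<gamma> + 1 \<longrightarrow>
           poly (map_poly real_of_int q) (of_rat u + of_rat v * \<gamma>) = of_rat A + of_rat B * \<gamma>" by blast
  show ?case
  proof (rule exI[of _ "of_int c + u * A + v * B"], rule exI[of _ "u * B + v * A + of_int a1 * v * B"], intro allI impI)
    fix \<gamma> :: real assume g: "\<gamma> * \<gamma> = of_int a1 * \<gamma> + 1"
    have "poly (map_poly real_of_int (pCons c q)) (of_rat u + of_rat v * \<gamma>)
        = of_int c + (of_rat u + of_rat v * \<gamma>) * (of_rat A + of_rat B * \<gamma>)"
      using AB g by (simp add: map_poly_pCons)
    also have "\<dots> = of_int c + of_rat u * of_rat A + of_rat v * of_rat B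
        + (of_rat u * of_rat B + of_rat v * of_rat A + of_int a1 * of_rat v * of_rat B) * \<gamma>
        + of_rat v * of_rat B * (\<gamma> * \<gamma> - of_int a1 * \<gamma> - 1)"
      by (simp add: algebra_simps)
    also have "\<dots> = of_rat (of_int c + u * A + v * B) + of_rat (u * B + v * A + of_int a1 * v * B) * \<gamma>"
      using g by (simp add: of_rat_add of_rat_mult)
    finally show "poly (map_poly real_of_int (pCons c q)) (of_rat u + of_rat v * \<gamma>)
        = of_rat (of_int c + u * A + v * B) + of_rat (u * B + v * A + of_int a1 * v * B) * \<gamma>" .
  qed
qed

lemma inOK_imp_OK:
  assumes "inOK z" shows "z \<in> OK a1"
proof -
  obtain u v where z: "z = of_rat u + of_rat v * \<alpha>" and t: "trc u v \<in> \<int>" and n: "nrm u v \<in> \<int>"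
    using assms unfolding inOK_def by blast
  obtain T where T: "trc u v = of_int T" using t by (metis Ints_cases)
  obtain N where N: "nrm u v = of_int N" using n by (metis Ints_cases)
  have K: "z \<in> Kfield a1" using z Kfield_iff by blast
  let ?q = "[:N, -T, 1:] :: int poly"
  have "poly (map_poly real_of_int ?q) z = z * z - of_rat (trc u v) * z + of_rat (nrm u v)"
    using T N by (simp add: map_poly_pCons algebra_simps)
  also have "\<dots> = 0" unfolding z by (rule quad_zero[OF alpha_sq])
  finally have "poly (map_poly real_of_int ?q) z = 0" .
  moreover have "lead_coeff ?q = 1" by simp
  ultimately have "algebraic_integer z" unfolding algebraic_integer_def by blast
  then show ?thesis using K unfolding OK_def by blast
qed

lemma OK_imp_inOK:
  assumes "z \<in> OK a1" shows "inOK z"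
proof -
  from assms have "z \<in> Kfield a1" and ai: "algebraic_integer z" unfolding OK_def by auto
  then obtain u v where z: "z = of_rat u + of_rat v * \<alpha>" using Kfield_iff by blast
  obtain q :: "int poly" where q: "lead_coeff q = 1" and qz: "poly (map_poly of_int q) z = 0"
    using ai unfolding algebraic_integer_def by blast
  let ?qQ = "map_poly (of_int :: int \<Rightarrow> rat) q"
  show ?thesis
  proof (cases "v = 0")
    case True
    have "of_rat (poly ?qQ u) = (0::real)"
      using qz z True poly_int_rat_real[of q] poly_of_rat_at_rat[of ?qQ u] by simp
    then have "poly ?qQ u = 0" by simp
    then have "u \<in> \<int>" using rational_root_int[OF q] by blast
    then have "trc u v \<in> \<int>" "nrm u v \<in> \<int>" using True unfolding trc_def nrm_def by auto
    then show ?thesis unfolding inOK_def using z by blast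
  next
    case False
    obtain A B where AB: "\<forall>\<gamma>. \<gamma> * \<gamma> = of_int a1 * \<gamma> + 1 \<longrightarrow>
           poly (map_poly real_of_int q) (of_rat u + of_rat v * \<gamma>) = of_rat A + of_rat B * \<gamma>"
      using conj_poly by blast
    have "of_rat A + of_rat B * \<alpha> = of_rat 0 + of_rat 0 * \<alpha>" using AB alpha_sq qz z by simp
    then have "A = 0 \<and> B = 0" using lin_indep by blast
    then have qzb: "poly (map_poly real_of_int q) (of_rat u + of_rat v * \<beta>) = 0" using AB beta_sq by simp
    define g where "g = [:nrm u v, - trc u v, 1:]"
    have g0: "g \<noteq> 0" and dg: "degree g = 2" and lg: "lead_coeff g = 1" unfolding g_def by auto
    define R where "R = ?qQ mod g"
    define h where "h = ?qQ div g"
    have dm: "?qQ = g * h + R" unfolding R_def h_def by simp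
    have Rc: "Polynomial.coeff R n = 0" if "n \<ge> 2" for n
    proof (cases "R = 0")
      case False
      then have "degree R < 2" using degree_mod_less[OF g0, of ?qQ] dg unfolding R_def by auto
      then show ?thesis using that by (simp add: coeff_eq_0)
    qed simp
    define r0 where "r0 = Polynomial.coeff R 0"
    define r1 where "r1 = Polynomial.coeff R 1"
    have Req: "R = [:r0, r1:]"
    proof (rule poly_eqI)
      fix n show "Polynomial.coeff R n = Polynomial.coeff [:r0, r1:] n"
        unfolding r0_def r1_def
        by (cases n; cases "n - 1") (auto simp: Rc coeff_pCons split: nat.splits)
    qed
    have ev: "of_rat r0 + y * of_rat r1 = 0"
      if y: "y = of_rat u + of_rat v * \<gamma>" and gam: "\<gamma> * \<gamma> = of_int a1 * \<gamma> + 1"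
         and yq: "poly (map_poly real_of_int q) y = 0" for y \<gamma>
    proof -
      have "poly (map_poly (of_rat :: rat \<Rightarrow> real) g) y = y * y - of_rat (trc u v) * y + of_rat (nrm u v)"
        unfolding g_def by (simp add: map_poly_pCons of_rat_minus algebra_simps)
      also have "\<dots> = 0" unfolding y by (rule quad_zero[OF gam])
      finally have g0: "poly (map_poly (of_rat :: rat \<Rightarrow> real) g) y = 0" .
      have "0 = poly (map_poly (of_rat :: rat \<Rightarrow> real) ?qQ) y" using yq poly_int_rat_real[of q y] by simp
      also have "\<dots> = poly (map_poly of_rat g) y * poly (map_poly of_rat h) y + poly (map_poly of_rat R) y"
        by (subst dm) (simp add: map_poly_of_rat_add map_poly_of_rat_mult)
      also have "\<dots> = of_rat r0 + y * of_rat r1" using g0 Req by (simp add: map_poly_pCons)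
      finally show ?thesis by simp
    qed
    have e1: "of_rat r0 + (of_rat u + of_rat v * \<alpha>) * of_rat r1 = 0"
      using ev[OF refl alpha_sq] qz z by simp
    have e2: "of_rat r0 + (of_rat u + of_rat v * \<beta>) * of_rat r1 = 0"
      using ev[OF refl beta_sq qzb] by simp
    have "of_rat r1 * of_rat v * (2 * \<alpha> - of_int a1) =
       (of_rat r0 + (of_rat u + of_rat v * \<alpha>) * of_rat r1) - (of_rat r0 + (of_rat u + of_rat v * \<beta>) * of_rat r1)"
      unfolding \<beta>_def by (simp add: algebra_simps)
    also have "\<dots> = 0" using e1 e2 by simp
    finally have "of_rat r1 * of_rat v * (2 * \<alpha> - of_int a1) = 0" .
    then have "r1 = 0" using False w_nz by simp
    moreover then have "r0 = 0" using e1 by simp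
    ultimately have "R = 0" using Req by simp
    then have gh: "?qQ = g * h" using dm by simp
    have c0: "Polynomial.coeff g 0 \<in> \<int>" by (rule gauss_monic[OF q gh lg])
    have c1: "Polynomial.coeff g 1 \<in> \<int>" by (rule gauss_monic[OF q gh lg])
    have "nrm u v \<in> \<int>" using c0 unfolding g_def by simp
    moreover have "trc u v \<in> \<int>" using c1 unfolding g_def by (metis Ints_minus minus_minus coeff_pCons_Suc coeff_pCons_0 One_nat_def)
    ultimately show ?thesis unfolding inOK_def using z by blast
  qed
qed

lemma OK_iff: "z \<in> OK a1 \<longleftrightarrow> inOK z"
  using OK_imp_inOK inOK_imp_OK by blast

end



context qf begin

lemma trc_nrm: "trc u v * trc u v - 4 * nrm u v = of_int (discr a1) * v * v"
  unfolding trc_def nrm_def discr_def by (simp add: algebra_simps power2_eq_square)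

lemma pair_aux:
  assumes "trc u v = of_int T" "nrm u v = of_int N" "trc u' v' = of_int T'" "nrm u' v' = of_int N'"
  shows "\<exists>F. of_int (discr a1) * v * v' = of_int F \<and> even (T * T' - F)"
proof -
  have e1: "of_int (discr a1) * v * v = of_int (T * T - 4 * N)"
  proof -
    have "of_int (discr a1) * v * v = trc u v * trc u v - 4 * nrm u v" using trc_nrm[of u v] by simp
    also have "\<dots> = of_int (T * T - 4 * N)" unfolding assms by simp
    finally show ?thesis .
  qed
  have e2: "of_int (discr a1) * v' * v' = of_int (T' * T' - 4 * N')"
  proof -
    have "of_int (discr a1) * v' * v' = trc u' v' * trc u' v' - 4 * nrm u' v'" using trc_nrm[of u' v'] by simp
    also have "\<dots> = of_int (T' * T' - 4 * N')" unfolding assms by simp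
    finally show ?thesis .
  qed
  have "(of_int (discr a1) * v * v')^2 = (of_int (discr a1) * v * v) * (of_int (discr a1) * v' * v')"
    by (simp add: power2_eq_square algebra_simps)
  also have "\<dots> = of_int ((T * T - 4 * N) * (T' * T' - 4 * N'))" using e1 e2 by simp
  finally have sq: "(of_int (discr a1) * v * v')^2 = of_int ((T * T - 4 * N) * (T' * T' - 4 * N'))" .
  have "of_int (discr a1) * v * v' \<in> \<int>" by (rule rat_sq_int) (simp only: sq Ints_of_int)
  then obtain F where F: "of_int (discr a1) * v * v' = of_int F" by (metis Ints_cases)
  have "of_int (F * F) = (of_int ((T * T - 4 * N) * (T' * T' - 4 * N')) :: rat)"
    using sq F by (simp add: power2_eq_square)
  then have FF: "F * F = (T * T - 4 * N) * (T' * T' - 4 * N')" by (simp only: of_int_eq_iff)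
  have "(F - T * T') * (F + T * T') = F * F - (T * T') * (T * T')" by (simp add: algebra_simps)
  also have "\<dots> = 2 * (2 * (N * N' * 4 - N * T' * T' - N' * T * T))" unfolding FF by (simp add: algebra_simps)
  finally have "(F - T * T') * (F + T * T') = 2 * (2 * (N * N' * 4 - N * T' * T' - N' * T * T))" .
  then have "even ((F - T * T') * (F + T * T'))" by simp
  then have "even (F - T * T') \<or> even (F + T * T')" by simp
  then have "even (F + T * T')" by (simp add: even_diff)
  then have "even (T * T' - F)" by (simp add: even_diff add.commute)
  then show ?thesis using F by blast
qed

lemma inOK_add: assumes "inOK z" "inOK z'" shows "inOK (z + z')"
proof -
  obtain u v where z: "z = of_rat u + of_rat v * \<alpha>" and t: "trc u v \<in> \<int>" and n: "nrm u v \<in> \<int>"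
    using assms(1) unfolding inOK_def by blast
  obtain u' v' where z': "z' = of_rat u' + of_rat v' * \<alpha>" and t': "trc u' v' \<in> \<int>" and n': "nrm u' v' \<in> \<int>"
    using assms(2) unfolding inOK_def by blast
  obtain T N T' N' where TN: "trc u v = of_int T" "nrm u v = of_int N" "trc u' v' = of_int T'" "nrm u' v' = of_int N'"
    using t n t' n' by (metis Ints_cases)
  obtain F where F: "of_int (discr a1) * v * v' = of_int F" "even (T * T' - F)" using pair_aux[OF TN] by blast
  obtain k where k: "T * T' - F = 2 * k" using F(2) by blast
  have "nrm (u + u') (v + v') = nrm u v + nrm u' v' + (trc u v * trc u' v' - of_int (discr a1) * v * v') / 2"
    unfolding trc_def nrm_def discr_def by (simp add: field_simps power2_eq_square)
  also have "\<dots> = of_int (N + N' + k)"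
  proof -
    have "of_int (T * T' - F) = (of_int (2 * k) :: rat)" using k by simp
    then have kk: "of_int T * of_int T' - of_int F = (2 * of_int k :: rat)" by simp
    show ?thesis unfolding TN F(1) using kk by simp
  qed
  finally have "nrm (u + u') (v + v') \<in> \<int>" by simp
  moreover have "trc (u + u') (v + v') = trc u v + trc u' v'" unfolding trc_def by (simp add: algebra_simps)
  then have "trc (u + u') (v + v') \<in> \<int>" using t t' by simp
  moreover have "z + z' = of_rat (u + u') + of_rat (v + v') * \<alpha>" using z z' by (simp add: of_rat_add algebra_simps)
  ultimately show ?thesis unfolding inOK_def by blast
qed

lemma inOK_mult: assumes "inOK z" "inOK z'" shows "inOK (z * z')"
proof -
  obtain u v where z: "z = of_rat u + of_rat v * \<alpha>" and t: "trc u v \<in> \<int>" and n: "nrm u v \<in> \<int>"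
    using assms(1) unfolding inOK_def by blast
  obtain u' v' where z': "z' = of_rat u' + of_rat v' * \<alpha>" and t': "trc u' v' \<in> \<int>" and n': "nrm u' v' \<in> \<int>"
    using assms(2) unfolding inOK_def by blast
  obtain T N T' N' where TN: "trc u v = of_int T" "nrm u v = of_int N" "trc u' v' = of_int T'" "nrm u' v' = of_int N'"
    using t n t' n' by (metis Ints_cases)
  obtain F where F: "of_int (discr a1) * v * v' = of_int F" "even (T * T' - F)" using pair_aux[OF TN] by blast
  obtain k where k: "T * T' - F = 2 * k" using F(2) by blast
  let ?U = "u * u' + v * v'" and ?V = "u * v' + u' * v + of_int a1 * v * v'"
  have "trc ?U ?V = (trc u v * trc u' v' + of_int (discr a1) * v * v') / 2"
    unfolding trc_def discr_def by (simp add: algebra_simps power2_eq_square)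
  also have "\<dots> = of_int (T * T' - k)"
  proof -
    have "of_int (T * T' - F) = (of_int (2 * k) :: rat)" using k by simp
    then have kk: "of_int F = (of_int T * of_int T' - 2 * of_int k :: rat)" by simp
    show ?thesis unfolding TN F(1) kk by simp
  qed
  finally have "trc ?U ?V \<in> \<int>" by simp
  moreover have "nrm ?U ?V = nrm u v * nrm u' v'"
    unfolding nrm_def by (simp add: algebra_simps)
  then have "nrm ?U ?V \<in> \<int>" using n n' by simp
  moreover have "z * z' = of_rat ?U + of_rat ?V * \<alpha>"
  proof -
    have "z * z' = of_rat u * of_rat u' + (of_rat u * of_rat v' + of_rat u' * of_rat v) * \<alpha> + of_rat v * of_rat v' * (\<alpha> * \<alpha>)"
      using z z' by (simp add: algebra_simps)
    then show ?thesis using alpha_sq by (simp add: of_rat_add of_rat_mult algebra_simps)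
  qed
  ultimately show ?thesis unfolding inOK_def by blast
qed

lemma inOK_lin: "inOK (of_int A + of_int B * \<alpha>)"
proof -
  have "of_int A + of_int B * \<alpha> = of_rat (of_int A) + of_rat (of_int B) * \<alpha>" by simp
  moreover have "trc (of_int A) (of_int B) \<in> \<int>" "nrm (of_int A) (of_int B) \<in> \<int>"
    unfolding trc_def nrm_def by simp_all
  ultimately show ?thesis unfolding inOK_def by blast
qed

lemma OK_add: "z \<in> OK a1 \<Longrightarrow> z' \<in> OK a1 \<Longrightarrow> z + z' \<in> OK a1"
  using inOK_add OK_iff by blast
lemma OK_mult: "z \<in> OK a1 \<Longrightarrow> z' \<in> OK a1 \<Longrightarrow> z * z' \<in> OK a1"
  using inOK_mult OK_iff by blast
lemma OK_lin: "of_int A + of_int B * \<alpha> \<in> OK a1"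
  using inOK_lin OK_iff by blast
lemma OK_int: "of_int A \<in> OK a1"
  using OK_lin[of A 0] by simp
lemma OK_alpha: "\<alpha> \<in> OK a1"
  using OK_lin[of 0 1] by simp
lemma OK_neg: "z \<in> OK a1 \<Longrightarrow> - z \<in> OK a1"
  using OK_mult[OF OK_int[of "-1"]] by simp
lemma OK_diff: "z \<in> OK a1 \<Longrightarrow> z' \<in> OK a1 \<Longrightarrow> z - z' \<in> OK a1"
  using OK_add[OF _ OK_neg] by simp
lemma OK_pow: "z \<in> OK a1 \<Longrightarrow> z ^ n \<in> OK a1"
  by (induction n) (simp_all add: OK_mult OK_int[of 1, simplified])

lemma OK_rep:
  assumes "z \<in> OK a1"
  shows "\<exists>A B M :: int. M \<noteq> 0 \<and> M dvd 2 * discr a1 \<and> of_int M * z = of_int A + of_int B * \<alpha>"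
proof -
  obtain u v where z: "z = of_rat u + of_rat v * \<alpha>" and t: "trc u v \<in> \<int>" and n: "nrm u v \<in> \<int>"
    using assms OK_iff unfolding inOK_def by blast
  obtain T N where TN: "trc u v = of_int T" "nrm u v = of_int N" using t n by (metis Ints_cases)
  obtain a b where ab: "quotient_of v = (a, b)" by force
  have b: "b > 0" using quotient_of_denom_pos[OF ab] .
  have v: "v = of_int a / of_int b" using quotient_of_div[OF ab] .
  have cop: "coprime a b" using quotient_of_coprime[OF ab] .
  have "of_int (discr a1) * v * v = of_int (T * T - 4 * N)"
  proof -
    have "of_int (discr a1) * v * v = trc u v * trc u v - 4 * nrm u v" using trc_nrm[of u v] by simp
    also have "\<dots> = of_int (T * T - 4 * N)" unfolding TN by simp
    finally show ?thesis .
  qed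
  then have "of_int (discr a1 * (a * a)) = (of_int ((T * T - 4 * N) * (b * b)) :: rat)"
    using b unfolding v by (simp add: field_simps)
  then have e: "discr a1 * (a * a) = (T * T - 4 * N) * (b * b)" by (simp only: of_int_eq_iff)
  have "b * b dvd discr a1 * (a * a)" using e by simp
  moreover have "coprime (b * b) (a * a)" using cop by (simp add: coprime_commute)
  ultimately have "b * b dvd discr a1" using coprime_dvd_mult_left_iff by blast
  then have bD: "b dvd discr a1" using dvd_mult_left by blast
  have u2: "2 * u = of_int T - of_int a1 * v" using TN unfolding trc_def by simp
  have r1: "of_int (2 * b) * u = of_int (b * T - a1 * a)" using u2 b unfolding v by (simp add: field_simps)
  have r2: "of_int (2 * b) * v = of_int (2 * a)" using b unfolding v by simp
  have "of_int (2 * b) * z = of_rat (of_int (2 * b) * u) + of_rat (of_int (2 * b) * v) * \<alpha>"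
    unfolding z by (simp add: of_rat_mult algebra_simps)
  also have "\<dots> = of_int (b * T - a1 * a) + of_int (2 * a) * \<alpha>" unfolding r1 r2 by (simp add: of_rat_diff of_rat_mult of_rat_add)
  finally have "of_int (2 * b) * z = of_int (b * T - a1 * a) + of_int (2 * a) * \<alpha>" .
  moreover have "2 * b \<noteq> 0" using b by simp
  moreover have "2 * b dvd 2 * discr a1" using bD by simp
  ultimately show ?thesis by blast
qed

end



context qf begin

lemma gen_least: "is_ideal a1 J \<Longrightarrow> S \<subseteq> J \<Longrightarrow> gen_ideal a1 S \<subseteq> J"
  unfolding gen_ideal_def by blast

lemma gen_mem: "x \<in> S \<Longrightarrow> x \<in> gen_ideal a1 S"
  unfolding gen_ideal_def by blast

lemma gen_add: "x \<in> gen_ideal a1 S \<Longrightarrow> y \<in> gen_ideal a1 S \<Longrightarrow> x + y \<in> gen_ideal a1 S"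
  unfolding gen_ideal_def is_ideal_def by blast

lemma gen_mult: "r \<in> OK a1 \<Longrightarrow> x \<in> gen_ideal a1 S \<Longrightarrow> r * x \<in> gen_ideal a1 S"
  unfolding gen_ideal_def is_ideal_def by blast

lemma pow_mult_mem: "x \<in> P \<Longrightarrow> y \<in> ideal_pow a1 P k \<Longrightarrow> x * y \<in> ideal_pow a1 P (Suc k)"
  by (simp add: ideal_mult_def) (rule gen_mem, blast)

lemma pow_add: "x \<in> ideal_pow a1 P k \<Longrightarrow> y \<in> ideal_pow a1 P k \<Longrightarrow> x + y \<in> ideal_pow a1 P k"
  by (cases k) (simp_all add: OK_add ideal_mult_def gen_add)

lemma pow_mult: "r \<in> OK a1 \<Longrightarrow> x \<in> ideal_pow a1 P k \<Longrightarrow> r * x \<in> ideal_pow a1 P k"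
  by (cases k) (simp_all add: OK_mult ideal_mult_def gen_mult)

lemma pow_sub:
  assumes "\<And>k. k \<le> n \<Longrightarrow> is_ideal a1 (Jf k)" and "OK a1 \<subseteq> Jf 0"
    and "\<And>k x y. k < n \<Longrightarrow> x \<in> P \<Longrightarrow> y \<in> Jf k \<Longrightarrow> x * y \<in> Jf (Suc k)"
  shows "ideal_pow a1 P n \<subseteq> Jf n"
proof -
  have "k \<le> n \<Longrightarrow> ideal_pow a1 P k \<subseteq> Jf k" for k
  proof (induction k)
    case 0 then show ?case using assms(2) by simp
  next
    case (Suc k)
    then have IH: "ideal_pow a1 P k \<subseteq> Jf k" by simp
    show ?case unfolding ideal_pow.simps ideal_mult_def
      using Suc.prems IH assms(3)[of k] by (intro gen_least assms(1)) auto
  qed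
  then show ?thesis by simp
qed

lemma lin_indep_int:
  assumes "of_int X + of_int Y * \<alpha> = of_int X' + of_int Y' * \<alpha>"
  shows "X = X' \<and> Y = Y'"
proof -
  have "of_rat (of_int X) + of_rat (of_int Y) * \<alpha> = of_rat (of_int X') + of_rat (of_int Y') * \<alpha>"
    using assms by simp
  then have "(of_int X :: rat) = of_int X' \<and> (of_int Y :: rat) = of_int Y'" by (rule lin_indep)
  then show ?thesis by simp
qed

definition Jsp :: "nat \<Rightarrow> nat \<Rightarrow> int \<Rightarrow> real set" where
  "Jsp p k c = {z \<in> OK a1. \<exists>A B M. \<not> int p dvd M \<and> of_int M * z = of_int A + of_int B * \<alpha> \<and> int p ^ k dvd A + B * c}"

definition Jin :: "nat \<Rightarrow> nat \<Rightarrow> real set" where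
  "Jin p k = {z \<in> OK a1. \<exists>A B M. \<not> int p dvd M \<and> of_int M * z = of_int A + of_int B * \<alpha> \<and> int p ^ k dvd A \<and> int p ^ k dvd B}"

lemma prod_expand:
  "(of_int A + of_int B * \<alpha>) * (of_int A' + of_int B' * \<alpha>) =
   of_int (A * A' + B * B') + of_int (A * B' + A' * B + a1 * B * B') * \<alpha>"
proof -
  have "(of_int A + of_int B * \<alpha>) * (of_int A' + of_int B' * \<alpha>) =
     of_int A * of_int A' + (of_int A * of_int B' + of_int A' * of_int B) * \<alpha> + of_int B * of_int B' * (\<alpha> * \<alpha>)"
    by (simp add: algebra_simps)
  also have "\<dots> = of_int (A * A' + B * B') + of_int (A * B' + A' * B + a1 * B * B') * \<alpha>"
    unfolding alpha_sq by (simp add: algebra_simps)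
  finally show ?thesis .
qed

lemma not_dvd_mult: "prime p \<Longrightarrow> \<not> int p dvd M \<Longrightarrow> \<not> int p dvd M' \<Longrightarrow> \<not> int p dvd M * M'"
  by (metis prime_dvd_mult_iff prime_nat_int_transfer)

lemma rep_p:
  assumes "z \<in> OK a1" "\<not> int p dvd 2 * discr a1"
  shows "\<exists>A B M. \<not> int p dvd M \<and> of_int M * z = of_int A + of_int B * \<alpha>"
proof -
  obtain A B M where "M dvd 2 * discr a1" "of_int M * z = of_int A + of_int B * \<alpha>"
    using OK_rep[OF assms(1)] by blast
  then show ?thesis using assms(2) by (meson dvd_trans)
qed

lemma Jsp_ideal:
  assumes p: "prime p" and pD: "\<not> int p dvd 2 * discr a1" and fc: "int p ^ k dvd c * c - a1 * c - 1"
  shows "is_ideal a1 (Jsp p k c)"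
  unfolding is_ideal_def
proof (intro conjI ballI)
  show "Jsp p k c \<subseteq> OK a1" unfolding Jsp_def by blast
  have "\<not> int p dvd 1" using p by (metis not_prime_unit prime_nat_int_transfer)
  then have "\<not> int p dvd 1 \<and> of_int 1 * (0::real) = of_int 0 + of_int 0 * \<alpha> \<and> int p ^ k dvd 0 + 0 * c" by simp
  moreover have "(0::real) \<in> OK a1" using OK_int[of 0] by simp
  ultimately show "0 \<in> Jsp p k c" unfolding Jsp_def by blast
next
  fix x y assume x: "x \<in> Jsp p k c" and y: "y \<in> Jsp p k c"
  obtain A B M where A: "\<not> int p dvd M" "of_int M * x = of_int A + of_int B * \<alpha>" "int p ^ k dvd A + B * c"
    using x unfolding Jsp_def by blast
  obtain A' B' M' where A': "\<not> int p dvd M'" "of_int M' * y = of_int A' + of_int B' * \<alpha>" "int p ^ k dvd A' + B' * c"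
    using y unfolding Jsp_def by blast
  have "of_int (M * M') * (x + y) = of_int (M' * A + M * A') + of_int (M' * B + M * B') * \<alpha>"
  proof -
    have "of_int (M * M') * (x + y) = of_int M' * (of_int M * x) + of_int M * (of_int M' * y)"
      by (simp add: algebra_simps)
    also have "\<dots> = of_int (M' * A + M * A') + of_int (M' * B + M * B') * \<alpha>"
      unfolding A(2) A'(2) by (simp add: algebra_simps)
    finally show ?thesis .
  qed
  moreover have "int p ^ k dvd (M' * A + M * A') + (M' * B + M * B') * c"
  proof -
    have "(M' * A + M * A') + (M' * B + M * B') * c = M' * (A + B * c) + M * (A' + B' * c)"
      by (simp add: algebra_simps)
    then show ?thesis using A(3) A'(3) by simp
  qed
  moreover have "\<not> int p dvd M * M'" using not_dvd_mult[OF p A(1) A'(1)] .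
  moreover have "x + y \<in> OK a1" using x y OK_add unfolding Jsp_def by blast
  ultimately show "x + y \<in> Jsp p k c" unfolding Jsp_def by blast
next
  fix x assume x: "x \<in> Jsp p k c"
  obtain A B M where A: "\<not> int p dvd M" "of_int M * x = of_int A + of_int B * \<alpha>" "int p ^ k dvd A + B * c"
    using x unfolding Jsp_def by blast
  have "of_int M * (- x) = of_int (- A) + of_int (- B) * \<alpha>" using A(2) by (simp add: algebra_simps)
  moreover have "int p ^ k dvd (- A) + (- B) * c" using A(3)
    by (metis dvd_minus_iff minus_add_distrib mult_minus_left)
  moreover have "- x \<in> OK a1" using x OK_neg unfolding Jsp_def by blast
  ultimately show "- x \<in> Jsp p k c" using A(1) unfolding Jsp_def by blast
next
  fix r x assume r: "r \<in> OK a1" and x: "x \<in> Jsp p k c"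
  obtain A B M where A: "\<not> int p dvd M" "of_int M * x = of_int A + of_int B * \<alpha>" "int p ^ k dvd A + B * c"
    using x unfolding Jsp_def by blast
  obtain A' B' M' where A': "\<not> int p dvd M'" "of_int M' * r = of_int A' + of_int B' * \<alpha>"
    using rep_p[OF r pD] by blast
  have "of_int (M' * M) * (r * x) = (of_int A' + of_int B' * \<alpha>) * (of_int A + of_int B * \<alpha>)"
    unfolding A(2)[symmetric] A'(2)[symmetric] by (simp add: algebra_simps)
  also have "\<dots> = of_int (A' * A + B' * B) + of_int (A' * B + A * B' + a1 * B' * B) * \<alpha>"
    by (rule prod_expand)
  finally have e: "of_int (M' * M) * (r * x) = of_int (A' * A + B' * B) + of_int (A' * B + A * B' + a1 * B' * B) * \<alpha>" .
  have "(A' * A + B' * B) + (A' * B + A * B' + a1 * B' * B) * c = (A' + B' * c) * (A + B * c) - B' * B * (c * c - a1 * c - 1)"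
    by (simp add: algebra_simps)
  moreover have "int p ^ k dvd (A' + B' * c) * (A + B * c)" using A(3) by simp
  moreover have "int p ^ k dvd B' * B * (c * c - a1 * c - 1)" using fc by simp
  ultimately have "int p ^ k dvd (A' * A + B' * B) + (A' * B + A * B' + a1 * B' * B) * c" by simp
  moreover have "\<not> int p dvd M' * M" using not_dvd_mult[OF p A'(1) A(1)] .
  moreover have "r * x \<in> OK a1" using x r OK_mult unfolding Jsp_def by blast
  ultimately show "r * x \<in> Jsp p k c" using e unfolding Jsp_def by blast
qed

lemma Jsp_prod:
  assumes p: "prime p" and fc: "int p ^ Suc k dvd c * c - a1 * c - 1"
    and x: "x \<in> Jsp p 1 c" and y: "y \<in> Jsp p k c"
  shows "x * y \<in> Jsp p (Suc k) c"
proof -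
  obtain A B M where A: "\<not> int p dvd M" "of_int M * x = of_int A + of_int B * \<alpha>" "int p ^ 1 dvd A + B * c"
    using x unfolding Jsp_def by blast
  obtain A' B' M' where A': "\<not> int p dvd M'" "of_int M' * y = of_int A' + of_int B' * \<alpha>" "int p ^ k dvd A' + B' * c"
    using y unfolding Jsp_def by blast
  have "of_int (M * M') * (x * y) = (of_int A + of_int B * \<alpha>) * (of_int A' + of_int B' * \<alpha>)"
    unfolding A(2)[symmetric] A'(2)[symmetric] by (simp add: algebra_simps)
  also have "\<dots> = of_int (A * A' + B * B') + of_int (A * B' + A' * B + a1 * B * B') * \<alpha>"
    by (rule prod_expand)
  finally have e: "of_int (M * M') * (x * y) = of_int (A * A' + B * B') + of_int (A * B' + A' * B + a1 * B * B') * \<alpha>" .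
  have "(A * A' + B * B') + (A * B' + A' * B + a1 * B * B') * c = (A + B * c) * (A' + B' * c) - B * B' * (c * c - a1 * c - 1)"
    by (simp add: algebra_simps)
  moreover have "int p ^ Suc k dvd (A + B * c) * (A' + B' * c)"
    using A(3) A'(3) by (simp add: mult_dvd_mono)
  moreover have "int p ^ Suc k dvd B * B' * (c * c - a1 * c - 1)" using fc by simp
  ultimately have "int p ^ Suc k dvd (A * A' + B * B') + (A * B' + A' * B + a1 * B * B') * c" by simp
  moreover have "\<not> int p dvd M * M'" using not_dvd_mult[OF p A(1) A'(1)] .
  moreover have "x * y \<in> OK a1" using x y OK_mult unfolding Jsp_def by blast
  ultimately show ?thesis using e unfolding Jsp_def by blast
qed

end



context qf begin

lemma Jin_ideal:
  assumes p: "prime p" and pD: "\<not> int p dvd 2 * discr a1"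
  shows "is_ideal a1 (Jin p k)"
  unfolding is_ideal_def
proof (intro conjI ballI)
  show "Jin p k \<subseteq> OK a1" unfolding Jin_def by blast
  have "\<not> int p dvd 1" using p by (metis not_prime_unit prime_nat_int_transfer)
  then have "\<not> int p dvd 1 \<and> of_int 1 * (0::real) = of_int 0 + of_int 0 * \<alpha> \<and> int p ^ k dvd 0 \<and> int p ^ k dvd 0" by simp
  moreover have "(0::real) \<in> OK a1" using OK_int[of 0] by simp
  ultimately show "0 \<in> Jin p k" unfolding Jin_def by blast
next
  fix x y assume x: "x \<in> Jin p k" and y: "y \<in> Jin p k"
  obtain A B M where A: "\<not> int p dvd M" "of_int M * x = of_int A + of_int B * \<alpha>" "int p ^ k dvd A" "int p ^ k dvd B"
    using x unfolding Jin_def by blast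
  obtain A' B' M' where A': "\<not> int p dvd M'" "of_int M' * y = of_int A' + of_int B' * \<alpha>" "int p ^ k dvd A'" "int p ^ k dvd B'"
    using y unfolding Jin_def by blast
  have "of_int (M * M') * (x + y) = of_int (M' * A + M * A') + of_int (M' * B + M * B') * \<alpha>"
  proof -
    have "of_int (M * M') * (x + y) = of_int M' * (of_int M * x) + of_int M * (of_int M' * y)"
      by (simp add: algebra_simps)
    also have "\<dots> = of_int (M' * A + M * A') + of_int (M' * B + M * B') * \<alpha>"
      unfolding A(2) A'(2) by (simp add: algebra_simps)
    finally show ?thesis .
  qed
  moreover have "int p ^ k dvd M' * A + M * A'" "int p ^ k dvd M' * B + M * B'"
    using A(3,4) A'(3,4) by simp_all
  moreover have "\<not> int p dvd M * M'" using not_dvd_mult[OF p A(1) A'(1)] .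
  moreover have "x + y \<in> OK a1" using x y OK_add unfolding Jin_def by blast
  ultimately show "x + y \<in> Jin p k" unfolding Jin_def by blast
next
  fix x assume x: "x \<in> Jin p k"
  obtain A B M where A: "\<not> int p dvd M" "of_int M * x = of_int A + of_int B * \<alpha>" "int p ^ k dvd A" "int p ^ k dvd B"
    using x unfolding Jin_def by blast
  have "of_int M * (- x) = of_int (- A) + of_int (- B) * \<alpha>" using A(2) by (simp add: algebra_simps)
  moreover have "int p ^ k dvd (- A)" "int p ^ k dvd (- B)" using A(3,4) by simp_all
  moreover have "- x \<in> OK a1" using x OK_neg unfolding Jin_def by blast
  ultimately show "- x \<in> Jin p k" using A(1) unfolding Jin_def by blast
next
  fix r x assume r: "r \<in> OK a1" and x: "x \<in> Jin p k"
  obtain A B M where A: "\<not> int p dvd M" "of_int M * x = of_int A + of_int B * \<alpha>" "int p ^ k dvd A" "int p ^ k dvd B"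
    using x unfolding Jin_def by blast
  obtain A' B' M' where A': "\<not> int p dvd M'" "of_int M' * r = of_int A' + of_int B' * \<alpha>"
    using rep_p[OF r pD] by blast
  have "of_int (M' * M) * (r * x) = (of_int A' + of_int B' * \<alpha>) * (of_int A + of_int B * \<alpha>)"
    unfolding A(2)[symmetric] A'(2)[symmetric] by (simp add: algebra_simps)
  also have "\<dots> = of_int (A' * A + B' * B) + of_int (A' * B + A * B' + a1 * B' * B) * \<alpha>"
    by (rule prod_expand)
  finally have e: "of_int (M' * M) * (r * x) = of_int (A' * A + B' * B) + of_int (A' * B + A * B' + a1 * B' * B) * \<alpha>" .
  have "int p ^ k dvd A' * A + B' * B" "int p ^ k dvd A' * B + A * B' + a1 * B' * B"
    using A(3,4) by simp_all
  moreover have "\<not> int p dvd M' * M" using not_dvd_mult[OF p A'(1) A(1)] .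
  moreover have "r * x \<in> OK a1" using x r OK_mult unfolding Jin_def by blast
  ultimately show "r * x \<in> Jin p k" using e unfolding Jin_def by blast
qed

lemma Jin_prod:
  assumes p: "prime p" and x: "x \<in> Jin p 1" and y: "y \<in> Jin p k"
  shows "x * y \<in> Jin p (Suc k)"
proof -
  obtain A B M where A: "\<not> int p dvd M" "of_int M * x = of_int A + of_int B * \<alpha>" "int p ^ 1 dvd A" "int p ^ 1 dvd B"
    using x unfolding Jin_def by blast
  obtain A' B' M' where A': "\<not> int p dvd M'" "of_int M' * y = of_int A' + of_int B' * \<alpha>" "int p ^ k dvd A'" "int p ^ k dvd B'"
    using y unfolding Jin_def by blast
  have "of_int (M * M') * (x * y) = (of_int A + of_int B * \<alpha>) * (of_int A' + of_int B' * \<alpha>)"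
    unfolding A(2)[symmetric] A'(2)[symmetric] by (simp add: algebra_simps)
  also have "\<dots> = of_int (A * A' + B * B') + of_int (A * B' + A' * B + a1 * B * B') * \<alpha>"
    by (rule prod_expand)
  finally have e: "of_int (M * M') * (x * y) = of_int (A * A' + B * B') + of_int (A * B' + A' * B + a1 * B * B') * \<alpha>" .
  have d: "int p ^ Suc k dvd X * Y" if "int p ^ 1 dvd X" "int p ^ k dvd Y" for X Y
    using mult_dvd_mono[OF that] by simp
  have "int p ^ Suc k dvd A * A' + B * B'" using d[OF A(3) A'(3)] d[OF A(4) A'(4)] by simp
  moreover have "int p ^ Suc k dvd A * B' + A' * B + a1 * B * B'"
  proof -
    have e2: "A * B' + A' * B + a1 * B * B' = A * B' + B * A' + a1 * (B * B')" by (simp add: algebra_simps)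
    show ?thesis unfolding e2 by (rule dvd_add[OF dvd_add[OF d[OF A(3) A'(4)] d[OF A(4) A'(3)]] dvd_mult[OF d[OF A(4) A'(4)]]])
  qed
  moreover have "\<not> int p dvd M * M'" using not_dvd_mult[OF p A(1) A'(1)] .
  moreover have "x * y \<in> OK a1" using x y OK_mult unfolding Jin_def by blast
  ultimately show ?thesis using e unfolding Jin_def by blast
qed

lemma coprime_pk:
  assumes p: "prime p" and "\<not> int p dvd M" and "int p ^ k dvd M * X"
  shows "int p ^ k dvd X"
proof -
  have pp: "prime (int p)" using p by simp
  have "coprime (int p) M" using assms(2) pp by (simp add: prime_imp_coprime)
  then have "coprime (int p ^ k) M" by simp
  then show ?thesis using assms(3) by (simp add: coprime_dvd_mult_right_iff)
qed

lemma Jsp_extract: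
  assumes p: "prime p" and "of_int A + of_int B * \<alpha> \<in> Jsp p k c"
  shows "int p ^ k dvd A + B * c"
proof -
  obtain A' B' M where M: "\<not> int p dvd M" "of_int M * (of_int A + of_int B * \<alpha>) = of_int A' + of_int B' * \<alpha>"
    "int p ^ k dvd A' + B' * c"
    using assms(2) unfolding Jsp_def by blast
  have "of_int (M * A) + of_int (M * B) * \<alpha> = of_int A' + of_int B' * \<alpha>"
    using M(2) by (simp add: algebra_simps)
  then have e1: "M * A = A'" and e2: "M * B = B'" using lin_indep_int by blast+
  have "M * (A + B * c) = A' + B' * c" unfolding e1[symmetric] e2[symmetric] by (simp add: algebra_simps)
  then have "int p ^ k dvd M * (A + B * c)" using M(3) by simp
  then show ?thesis using coprime_pk[OF p M(1)] by blast
qed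

lemma Jin_extract:
  assumes p: "prime p" and "of_int A + of_int B * \<alpha> \<in> Jin p k"
  shows "int p ^ k dvd A \<and> int p ^ k dvd B"
proof -
  obtain A' B' M where M: "\<not> int p dvd M" "of_int M * (of_int A + of_int B * \<alpha>) = of_int A' + of_int B' * \<alpha>"
    "int p ^ k dvd A'" "int p ^ k dvd B'"
    using assms(2) unfolding Jin_def by blast
  have "of_int (M * A) + of_int (M * B) * \<alpha> = of_int A' + of_int B' * \<alpha>"
    using M(2) by (simp add: algebra_simps)
  then have "M * A = A'" "M * B = B'" using lin_indep_int by blast+
  then show ?thesis using M(3,4) coprime_pk[OF p M(1)] by blast
qed

lemma int_in_P: "lies_over P p \<Longrightarrow> (of_int n \<in> P) \<longleftrightarrow> int p dvd n"
  unfolding lies_over_def by (metis (mono_tags, lifting) mem_Collect_eq)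

lemma P_ideal_ops:
  assumes "is_prime_ideal a1 P"
  shows "x \<in> P \<Longrightarrow> y \<in> P \<Longrightarrow> x + y \<in> P" "x \<in> P \<Longrightarrow> - x \<in> P"
    "r \<in> OK a1 \<Longrightarrow> x \<in> P \<Longrightarrow> r * x \<in> P" "P \<subseteq> OK a1"
  using assms unfolding is_prime_ideal_def is_ideal_def by blast+

lemma P_sub_Jsp:
  assumes p: "prime p" and pD: "\<not> int p dvd 2 * discr a1" and PP: "is_prime_ideal a1 P"
    and lo: "lies_over P p" and ac: "\<alpha> - of_int c \<in> P"
  shows "P \<subseteq> Jsp p 1 c"
proof
  fix z assume z: "z \<in> P"
  have zO: "z \<in> OK a1" using z P_ideal_ops(4)[OF PP] by blast
  obtain A B M where M: "\<not> int p dvd M" "of_int M * z = of_int A + of_int B * \<alpha>"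
    using rep_p[OF zO pD] by blast
  have "of_int (A + B * c) = of_int M * z + of_int (- B) * (\<alpha> - of_int c)"
    using M(2) by (simp add: algebra_simps)
  moreover have "of_int M * z \<in> P" using P_ideal_ops(3)[OF PP OK_int z] .
  moreover have "of_int (- B) * (\<alpha> - of_int c) \<in> P" using P_ideal_ops(3)[OF PP OK_int ac] .
  ultimately have "of_int (A + B * c) \<in> P" using P_ideal_ops(1)[OF PP] by metis
  then have "int p dvd A + B * c" using int_in_P[OF lo] by blast
  then show "z \<in> Jsp p 1 c" unfolding Jsp_def using zO M by auto
qed

lemma P_sub_Jin:
  assumes p: "prime p" and pD: "\<not> int p dvd 2 * discr a1" and PP: "is_prime_ideal a1 P"
    and lo: "lies_over P p" and inert: "\<And>c. \<not> int p dvd c * c - a1 * c - 1"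
  shows "P \<subseteq> Jin p 1"
proof
  fix z assume z: "z \<in> P"
  have zO: "z \<in> OK a1" using z P_ideal_ops(4)[OF PP] by blast
  have pp: "prime (int p)" using p by simp
  obtain A B M where M: "\<not> int p dvd M" "of_int M * z = of_int A + of_int B * \<alpha>"
    using rep_p[OF zO pD] by blast
  have Mz: "of_int M * z \<in> P" using P_ideal_ops(3)[OF PP OK_int z] .
  have "of_int (A + a1 * B) + of_int (- B) * \<alpha> \<in> OK a1" by (rule OK_lin)
  then have "(of_int (A + a1 * B) + of_int (- B) * \<alpha>) * (of_int M * z) \<in> P"
    using P_ideal_ops(3)[OF PP _ Mz] by blast
  moreover have "(of_int (A + a1 * B) + of_int (- B) * \<alpha>) * (of_int M * z) = of_int (A * A + a1 * A * B - B * B)"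
  proof -
    have "(of_int (A + a1 * B) + of_int (- B) * \<alpha>) * (of_int M * z)
       = (of_int (A + a1 * B) + of_int (- B) * \<alpha>) * (of_int A + of_int B * \<alpha>)" using M(2) by simp
    also have "\<dots> = of_int ((A + a1 * B) * A + (- B) * B) + of_int ((A + a1 * B) * B + A * (- B) + a1 * (- B) * B) * \<alpha>"
      by (rule prod_expand)
    also have "\<dots> = of_int (A * A + a1 * A * B - B * B)" by (simp add: algebra_simps)
    finally show ?thesis .
  qed
  ultimately have "of_int (A * A + a1 * A * B - B * B) \<in> P" by simp
  then have nA: "int p dvd A * A + a1 * A * B - B * B" using int_in_P[OF lo] by blast
  have pB: "int p dvd B"
  proof (rule ccontr)
    assume nB: "\<not> int p dvd B"
    have "coprime (int p) B" using nB pp by (simp add: prime_imp_coprime)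
    then have "coprime B (int p)" by (simp add: coprime_commute)
    then obtain s where s: "[B * s = 1] (mod int p)" using cong_solve_coprime_int by blast
    then have "int p dvd B * s - 1" by (simp add: cong_iff_dvd_diff)
    then obtain t where "B * s - 1 = int p * t" by (elim dvdE)
    then have t: "B * s = 1 + int p * t" by simp
    let ?c = "- A * s"
    have "B * B * (?c * ?c - a1 * ?c - 1) = (A * A + a1 * A * B - B * B) + int p * (A * A * (2 * t + int p * t * t) + a1 * A * B * t)"
    proof -
      have "B * B * (?c * ?c - a1 * ?c - 1) = A * A * ((B * s) * (B * s)) + a1 * A * B * (B * s) - B * B"
        by (simp add: algebra_simps)
      also have "\<dots> = (A * A + a1 * A * B - B * B) + int p * (A * A * (2 * t + int p * t * t) + a1 * A * B * t)"
        unfolding t by (simp add: algebra_simps)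
      finally show ?thesis .
    qed
    then have "int p dvd B * B * (?c * ?c - a1 * ?c - 1)" using nA by simp
    then have "int p dvd B * B \<or> int p dvd ?c * ?c - a1 * ?c - 1"
      using prime_dvd_mult_iff[OF pp] by blast
    then show False using inert nB prime_dvd_mult_iff[OF pp] by blast
  qed
  have pA: "int p dvd A"
  proof -
    have e: "A * A = (A * A + a1 * A * B - B * B) + B * (B - a1 * A)" by (simp add: algebra_simps)
    have "int p dvd (A * A + a1 * A * B - B * B) + B * (B - a1 * A)" by (rule dvd_add[OF nA dvd_mult2[OF pB]])
    then have "int p dvd A * A" by (simp only: e[symmetric])
    then show ?thesis using prime_dvd_mult_iff[OF pp] by blast
  qed
  show "z \<in> Jin p 1" unfolding Jin_def using zO M pA pB by auto
qed

end



context qf begin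

lemma f_shift: "(c + Y) * (c + Y) - a1 * (c + Y) - 1 = (c * c - a1 * c - 1) + Y * (2 * c - a1) + Y * Y"
  for c Y :: int by (simp add: algebra_simps)

lemma hensel:
  assumes p: "prime p" and d0: "int p dvd c0 * c0 - a1 * c0 - 1" and nd: "\<not> int p dvd 2 * c0 - a1"
  shows "\<exists>c. int p ^ k dvd c * c - a1 * c - 1 \<and> int p dvd c - c0"
proof (induction k)
  case 0 then show ?case by (intro exI[of _ c0]) simp
next
  case (Suc k)
  show ?case
  proof (cases k)
    case 0 then show ?thesis using d0 by (intro exI[of _ c0]) simp
  next
    case (Suc j)
    obtain c where c: "int p ^ k dvd c * c - a1 * c - 1" "int p dvd c - c0" using Suc.IH by blast
    have pp: "prime (int p)" using p by simp
    obtain m where m: "c * c - a1 * c - 1 = int p ^ k * m" using c(1) by (elim dvdE)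
    have nd2: "\<not> int p dvd 2 * c - a1"
    proof
      assume "int p dvd 2 * c - a1"
      moreover have "2 * c0 - a1 = (2 * c - a1) - 2 * (c - c0)" by simp
      ultimately have "int p dvd 2 * c0 - a1" using c(2) by (metis dvd_diff dvd_mult)
      then show False using nd by simp
    qed
    have "coprime (int p) (2 * c - a1)" using nd2 pp by (simp add: prime_imp_coprime)
    then have "coprime (2 * c - a1) (int p)" by (simp add: coprime_commute)
    then obtain s where "[(2 * c - a1) * s = 1] (mod int p)" using cong_solve_coprime_int by blast
    then have "int p dvd (2 * c - a1) * s - 1" by (simp add: cong_iff_dvd_diff)
    then obtain t where "(2 * c - a1) * s - 1 = int p * t" by (elim dvdE)
    then have t: "(2 * c - a1) * s = 1 + int p * t" by simp
    define y where "y = - m * s"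
    define c' where "c' = c + y * int p ^ k"
    have "c' * c' - a1 * c' - 1 = int p ^ Suc k * (- m * t + y * y * int p ^ j)"
    proof -
      have "c' * c' - a1 * c' - 1 = (c * c - a1 * c - 1) + (y * int p ^ k) * (2 * c - a1) + (y * int p ^ k) * (y * int p ^ k)"
        unfolding c'_def by (rule f_shift)
      also have "\<dots> = int p ^ k * m + int p ^ k * (- m * ((2 * c - a1) * s)) + (y * int p ^ k) * (y * int p ^ k)"
        unfolding m y_def by (simp add: algebra_simps)
      also have "\<dots> = int p ^ Suc k * (- m * t + y * y * int p ^ j)"
        unfolding t using Suc by (simp add: algebra_simps power_add[symmetric])
      finally show ?thesis .
    qed
    then have "int p ^ Suc k dvd c' * c' - a1 * c' - 1" by simp
    moreover have "int p dvd c' - c0"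
    proof -
      have e: "c' - c0 = (c - c0) + int p * (y * int p ^ j)" unfolding c'_def using Suc by simp
      show ?thesis unfolding e by (rule dvd_add[OF c(2)]) simp
    qed
    ultimately show ?thesis by blast
  qed
qed

lemma nd_of_root:
  assumes "int p dvd c * c - a1 * c - 1" "\<not> int p dvd 2 * discr a1" "prime p"
  shows "\<not> int p dvd 2 * c - a1"
proof
  assume h: "int p dvd 2 * c - a1"
  have e: "discr a1 = (2 * c - a1) * (2 * c - a1) - 4 * (c * c - a1 * c - 1)"
    unfolding discr_def by (simp add: algebra_simps power2_eq_square)
  have h1: "int p dvd (2 * c - a1) * (2 * c - a1)" using h by simp
  have h2: "int p dvd 4 * (c * c - a1 * c - 1)" using assms(1) by (rule dvd_mult)
  have "int p dvd (2 * c - a1) * (2 * c - a1) - 4 * (c * c - a1 * c - 1)" by (rule dvd_diff[OF h1 h2])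
  then have "int p dvd discr a1" using e by simp
  then show False using assms(2) by (meson dvd_mult)
qed

lemma split_root:
  assumes PP: "is_prime_ideal a1 P" and lo: "lies_over P p" and d: "int p dvd c * c - a1 * c - 1"
  shows "\<exists>c0. int p dvd c0 * c0 - a1 * c0 - 1 \<and> \<alpha> - of_int c0 \<in> P"
proof -
  have e: "(\<alpha> - of_int c) * (\<alpha> - of_int (a1 - c)) = of_int (- (c * c - a1 * c - 1))"
  proof -
    have "(\<alpha> - of_int c) * (\<alpha> - of_int (a1 - c)) = \<alpha> * \<alpha> - of_int a1 * \<alpha> + of_int c * (of_int a1 - of_int c)"
      by (simp add: algebra_simps)
    also have "\<dots> = of_int (- (c * c - a1 * c - 1))" unfolding alpha_sq by (simp add: algebra_simps)
    finally show ?thesis .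
  qed
  have "int p dvd - (c * c - a1 * c - 1)" using d by (simp only: dvd_minus_iff)
  then have "of_int (- (c * c - a1 * c - 1)) \<in> P" using int_in_P[OF lo] by blast
  then have inP: "(\<alpha> - of_int c) * (\<alpha> - of_int (a1 - c)) \<in> P" using e by simp
  have O1: "\<alpha> - of_int c \<in> OK a1" using OK_lin[of "- c" 1] by simp
  have "\<alpha> - of_int (a1 - c) = of_int (- (a1 - c)) + of_int 1 * \<alpha>" by simp
  then have O2: "\<alpha> - of_int (a1 - c) \<in> OK a1" using OK_lin[of "- (a1 - c)" 1] by metis
  have "\<alpha> - of_int c \<in> P \<or> \<alpha> - of_int (a1 - c) \<in> P"
    using PP O1 O2 inP unfolding is_prime_ideal_def by blast
  moreover have "(a1 - c) * (a1 - c) - a1 * (a1 - c) - 1 = c * c - a1 * c - 1" by (simp add: algebra_simps)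
  ultimately show ?thesis using d by metis
qed

fun Fs :: "nat \<Rightarrow> int" where
  "Fs 0 = 0" | "Fs (Suc 0) = 1" | "Fs (Suc (Suc n)) = a1 * Fs (Suc n) + Fs n"

definition Gs :: "nat \<Rightarrow> int" where "Gs n = Fs (Suc n) - a1 * Fs n"

lemma Gs_0 [simp]: "Gs 0 = 1" unfolding Gs_def by simp
lemma Gs_Suc: "Gs (Suc n) = Fs n" unfolding Gs_def by simp
lemma Fs_Suc: "Fs (Suc n) = a1 * Fs n + Gs n" unfolding Gs_def by simp

lemma pow_FG:
  fixes \<gamma> :: real
  assumes "\<gamma> * \<gamma> = of_int a1 * \<gamma> + 1"
  shows "\<gamma> ^ n = of_int (Fs n) * \<gamma> + of_int (Gs n)"
proof (induction n)
  case 0 then show ?case by simp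
next
  case (Suc n)
  have "\<gamma> ^ Suc n = \<gamma> * (of_int (Fs n) * \<gamma> + of_int (Gs n))" using Suc by simp
  also have "\<dots> = of_int (Fs n) * (\<gamma> * \<gamma>) + of_int (Gs n) * \<gamma>" by (simp add: algebra_simps)
  also have "\<dots> = of_int (Fs (Suc n)) * \<gamma> + of_int (Gs (Suc n))"
    unfolding assms Fs_Suc Gs_Suc by (simp add: algebra_simps)
  finally show ?case .
qed

lemma cassini: "Gs n * Gs n + a1 * Fs n * Gs n - Fs n * Fs n = (-1) ^ n"
proof (induction n)
  case 0 then show ?case by simp
next
  case (Suc n)
  have "Gs (Suc n) * Gs (Suc n) + a1 * Fs (Suc n) * Gs (Suc n) - Fs (Suc n) * Fs (Suc n)
     = - (Gs n * Gs n + a1 * Fs n * Gs n - Fs n * Fs n)"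
    unfolding Fs_Suc Gs_Suc by (simp add: algebra_simps)
  then show ?case using Suc by simp
qed

lemma seq_shift:
  assumes "x \<in> Lf a1"
  shows "x (n + t) = Fs t * x (Suc n) + Gs t * x n"
proof (induction t arbitrary: n)
  case 0 then show ?case by simp
next
  case (Suc t)
  have r: "x (n + 2) = a1 * x (n + 1) + x n" using assms unfolding Lf_def by blast
  have "x (n + Suc t) = x (Suc n + t)" by simp
  also have "\<dots> = Fs t * x (Suc (Suc n)) + Gs t * x (Suc n)" by (rule Suc.IH)
  also have "\<dots> = Fs t * (a1 * x (Suc n) + x n) + Gs t * x (Suc n)" using r by simp
  also have "\<dots> = Fs (Suc t) * x (Suc n) + Gs (Suc t) * x n"
    unfolding Fs_Suc Gs_Suc by (simp add: algebra_simps)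
  finally show ?case .
qed

lemma seq_Q:
  assumes "x \<in> Lf a1"
  shows "x (Suc n) * x (Suc n) - a1 * x (Suc n) * x n - x n * x n = (-1) ^ n * (x 1 * x 1 - a1 * x 1 * x 0 - x 0 * x 0)"
proof (induction n)
  case 0 then show ?case by simp
next
  case (Suc n)
  have r: "x (n + 2) = a1 * x (n + 1) + x n" using assms unfolding Lf_def by blast
  then have r': "x (Suc (Suc n)) = a1 * x (Suc n) + x n" by simp
  have "x (Suc (Suc n)) * x (Suc (Suc n)) - a1 * x (Suc (Suc n)) * x (Suc n) - x (Suc n) * x (Suc n)
     = - (x (Suc n) * x (Suc n) - a1 * x (Suc n) * x n - x n * x n)"
    unfolding r' by (simp add: algebra_simps)
  then show ?case using Suc by simp
qed

end



context qf begin

lemma ZA_mult: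
  assumes "\<exists>A B. z = of_int A + of_int B * \<alpha>" "\<exists>A B. z' = of_int A + of_int B * \<alpha>"
  shows "\<exists>A B. z * z' = of_int A + of_int B * \<alpha>"
  using assms prod_expand by blast

lemma ZA_pow:
  assumes "\<exists>A B. z = of_int A + of_int B * \<alpha>"
  shows "\<exists>A B. z ^ n = of_int A + of_int B * \<alpha>"
proof (induction n)
  case 0 show ?case by (rule exI[of _ 1], rule exI[of _ 0]) simp
next
  case (Suc n) then show ?case using ZA_mult[OF assms Suc] by simp
qed

lemma period_exists:
  fixes m :: int assumes m: "m > 0"
  shows "\<exists>t \<ge> 1. m dvd Fs t \<and> m dvd Gs t - 1"
proof -
  define g where "g n = (Fs n mod m, Gs n mod m)" for n
  have "range g \<subseteq> {0..<m} \<times> {0..<m}" unfolding g_def using m by auto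
  then have fin: "finite (range g)" by (rule finite_subset) simp
  have "\<not> inj g"
  proof
    assume "inj g"
    then have "finite (UNIV :: nat set)" using fin finite_imageD by blast
    then show False by simp
  qed
  then obtain i j where ij: "i \<noteq> j" "g i = g j" unfolding inj_def by blast
  have "\<exists>i j. i < j \<and> g i = g j"
  proof (cases "i < j")
    case True then show ?thesis using ij by blast
  next
    case False then have "j < i" using ij(1) by simp
    then show ?thesis using ij(2) by metis
  qed
  then obtain i j where ij: "i < j" "g i = g j" by blast
  have "m dvd Fs j - Fs i" "m dvd Gs j - Gs i"
    using ij(2) unfolding g_def by (simp_all add: mod_eq_dvd_iff dvd_diff_commute)
  then obtain k1 k2 where k: "Fs j - Fs i = m * k1" "Gs j - Gs i = m * k2" by (meson dvdE)
  define t where "t = j - i"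
  have t1: "t \<ge> 1" using ij(1) unfolding t_def by simp
  have aj: "\<alpha> ^ j = \<alpha> ^ i + of_int m * (of_int k2 + of_int k1 * \<alpha>)"
  proof -
    have "\<alpha> ^ j - \<alpha> ^ i = of_int (Fs j - Fs i) * \<alpha> + of_int (Gs j - Gs i)"
      unfolding pow_FG[OF alpha_sq] by (simp add: algebra_simps)
    then show ?thesis unfolding k by (simp add: algebra_simps)
  qed
  have inv: "\<alpha> * (\<alpha> - of_int a1) = 1" using alpha_sq by (simp add: algebra_simps)
  have j: "j = t + i" unfolding t_def using ij(1) by simp
  have "\<alpha> ^ t = \<alpha> ^ t * (\<alpha> * (\<alpha> - of_int a1)) ^ i" using inv by simp
  also have "\<dots> = \<alpha> ^ (t + i) * (\<alpha> - of_int a1) ^ i"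
    by (simp only: power_mult_distrib power_add mult.assoc)
  also have "\<dots> = \<alpha> ^ j * (\<alpha> - of_int a1) ^ i" unfolding j ..
  also have "\<dots> = (\<alpha> * (\<alpha> - of_int a1)) ^ i + of_int m * ((of_int k2 + of_int k1 * \<alpha>) * (\<alpha> - of_int a1) ^ i)"
    unfolding aj by (simp only: power_mult_distrib distrib_right mult.assoc)
  also have "\<dots> = 1 + of_int m * ((of_int k2 + of_int k1 * \<alpha>) * (\<alpha> - of_int a1) ^ i)"
    using inv by simp
  finally have at: "\<alpha> ^ t = 1 + of_int m * ((of_int k2 + of_int k1 * \<alpha>) * (\<alpha> - of_int a1) ^ i)" .
  have "\<exists>A B. (\<alpha> - of_int a1) ^ i = of_int A + of_int B * \<alpha>"
    by (rule ZA_pow) (rule exI[of _ "- a1"], rule exI[of _ 1], simp)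
  then obtain K L where KL: "(of_int k2 + of_int k1 * \<alpha>) * (\<alpha> - of_int a1) ^ i = of_int K + of_int L * \<alpha>"
    using ZA_mult[of "of_int k2 + of_int k1 * \<alpha>"] by blast
  have at2: "\<alpha> ^ t = 1 + of_int m * (of_int K + of_int L * \<alpha>)" using at by (simp only: KL)
  have "of_int (Gs t) + of_int (Fs t) * \<alpha> = \<alpha> ^ t" using pow_FG[OF alpha_sq, of t] by simp
  also have "\<dots> = of_int (1 + m * K) + of_int (m * L) * \<alpha>" unfolding at2 by (simp add: algebra_simps)
  finally have "of_int (Gs t) + of_int (Fs t) * \<alpha> = of_int (1 + m * K) + of_int (m * L) * \<alpha>" .
  then have "Gs t = 1 + m * K" "Fs t = m * L" using lin_indep_int by blast+
  then show ?thesis using t1 by (intro exI[of _ t]) simp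
qed

end

locale qfm = qf +
  fixes p v :: nat and P :: "real set" and x :: "nat \<Rightarrow> int"
  assumes p: "prime p" and pD: "\<not> int p dvd 2 * discr a1"
    and pQ: "\<not> int p dvd (x 1 * x 1 - a1 * x 1 * x 0 - x 0 * x 0)"
    and p2: "\<not> int p dvd 2"
    and PP: "is_prime_ideal a1 P" and lo: "lies_over P p" and v: "v \<ge> 1" and xL: "x \<in> Lf a1"
begin

definition "m = int p ^ v"
definition "I = ideal_pow a1 P v"

lemma pp: "prime (int p)" using p by simp

lemma p_pow_in: "of_int (int p ^ k) \<in> ideal_pow a1 P k"
proof (induction k)
  case 0 show ?case using OK_int[of 1] by simp
next
  case (Suc k)
  have h: "of_int (int p) \<in> P" using int_in_P[OF lo, of "int p"] by (metis dvd_refl)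
  have "of_int (int p) * of_int (int p ^ k) \<in> ideal_pow a1 P (Suc k)" by (rule pow_mult_mem[OF h Suc])
  then show ?case by (simp only: of_int_mult power_Suc)
qed

lemma suff:
  assumes "m dvd Fs t" "m dvd Gs t - 1"
  shows "\<alpha> ^ t - 1 \<in> I"
proof -
  obtain k l where kl: "Fs t = m * k" "Gs t - 1 = m * l" using assms by (meson dvdE)
  have "\<alpha> ^ t - 1 = (of_int l + of_int k * \<alpha>) * of_int m"
    unfolding pow_FG[OF alpha_sq, of t] using kl
    by (simp add: algebra_simps)
  moreover have "of_int m \<in> I" unfolding m_def I_def using p_pow_in by simp
  ultimately show ?thesis unfolding I_def using pow_mult[OF OK_lin] by simp
qed

lemma Q_coprime: "\<not> int p dvd (x (Suc n) * x (Suc n) - a1 * x (Suc n) * x n - x n * x n)"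
proof
  assume h: "int p dvd (x (Suc n) * x (Suc n) - a1 * x (Suc n) * x n - x n * x n)"
  have e: "x (Suc n) * x (Suc n) - a1 * x (Suc n) * x n - x n * x n = (-1) ^ n * (x 1 * x 1 - a1 * x 1 * x 0 - x 0 * x 0)"
    by (rule seq_Q[OF xL])
  have h2: "int p dvd (-1) ^ n * (x 1 * x 1 - a1 * x 1 * x 0 - x 0 * x 0)" using h unfolding e .
  have "(-1::int) ^ n * X = X \<or> (-1::int) ^ n * X = - X" for X
    by (cases "even n") simp_all
  then have "int p dvd (x 1 * x 1 - a1 * x 1 * x 0 - x 0 * x 0)"
    using h2 by (metis dvd_minus_iff)
  then show False using pQ by contradiction
qed

lemma period_iff:
  "(\<exists>N. \<forall>n\<ge>N. [x (n + t) = x n] (mod m)) \<longleftrightarrow> (m dvd Fs t \<and> m dvd Gs t - 1)"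
proof
  assume "\<exists>N. \<forall>n\<ge>N. [x (n + t) = x n] (mod m)"
  then obtain N where N: "\<forall>n\<ge>N. [x (n + t) = x n] (mod m)" by blast
  let ?X = "x N" and ?Y = "x (Suc N)" and ?Z = "x (Suc (Suc N))"
  let ?F = "Fs t" and ?b = "Gs t - 1"
  have "[x (N + t) = x N] (mod m)" using N by simp
  then have "m dvd x (N + t) - x N" by (simp add: cong_iff_dvd_diff)
  then have d1: "m dvd ?F * ?Y + ?b * ?X" using seq_shift[OF xL, of N t] by (simp add: algebra_simps)
  have "[x (Suc N + t) = x (Suc N)] (mod m)" using N[rule_format, of "Suc N"] by simp
  then have "m dvd x (Suc N + t) - x (Suc N)" by (simp add: cong_iff_dvd_diff)
  then have d2: "m dvd ?F * ?Z + ?b * ?Y" using seq_shift[OF xL, of "Suc N" t] by (simp add: algebra_simps)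
  have "x (N + 2) = a1 * x (N + 1) + x N" using xL unfolding Lf_def by blast
  then have z: "?Z = a1 * ?Y + ?X" by simp
  let ?Q = "?Y * ?Y - a1 * ?Y * ?X - ?X * ?X"
  have e1: "?Q * ?F = ?Y * (?F * ?Y + ?b * ?X) - ?X * (?F * ?Z + ?b * ?Y)" unfolding z by (simp add: algebra_simps)
  have e2: "?Q * ?b = ?Y * (?F * ?Z + ?b * ?Y) - ?Z * (?F * ?Y + ?b * ?X)" unfolding z by (simp add: algebra_simps)
  have "m dvd ?Q * ?F" unfolding e1 using d1 d2 by (intro dvd_diff dvd_mult)
  then have F: "m dvd ?F" unfolding m_def by (rule coprime_pk[OF p Q_coprime])
  have "m dvd ?Q * ?b" unfolding e2 using d1 d2 by (intro dvd_diff dvd_mult)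
  then have b: "m dvd ?b" unfolding m_def by (rule coprime_pk[OF p Q_coprime])
  show "m dvd Fs t \<and> m dvd Gs t - 1" using F b by simp
next
  assume a: "m dvd Fs t \<and> m dvd Gs t - 1"
  have "[x (n + t) = x n] (mod m)" for n
  proof -
    have "x (n + t) - x n = Fs t * x (Suc n) + (Gs t - 1) * x n"
      using seq_shift[OF xL, of n t] by (simp add: algebra_simps)
    moreover have "m dvd Fs t * x (Suc n) + (Gs t - 1) * x n" using a by simp
    ultimately show ?thesis by (simp add: cong_iff_dvd_diff)
  qed
  then show "\<exists>N. \<forall>n\<ge>N. [x (n + t) = x n] (mod m)" by blast
qed

lemma even_of:
  assumes "m dvd Fs t" "m dvd Gs t - 1"
  shows "even t"
proof (rule ccontr)
  assume o: "odd t"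
  have "(-1::int) ^ t - 1 = (Gs t - 1) * (Gs t + 1) + Fs t * (a1 * Gs t - Fs t)"
    unfolding cassini[symmetric] by (simp add: algebra_simps)
  then have "m dvd (-1::int) ^ t - 1" using assms by simp
  then have "m dvd -2" using o by simp
  moreover have pm: "int p dvd m" unfolding m_def using v by (simp add: dvd_power)
  ultimately have "int p dvd -2" using dvd_trans by blast
  then have "int p dvd 2" by simp
  then show False using p2 by simp
qed

lemma necc:
  assumes ev: "even t" and mem: "\<alpha> ^ t - 1 \<in> I"
  shows "m dvd Fs t \<and> m dvd Gs t - 1"
proof -
  have at: "\<alpha> ^ t - 1 = of_int (Gs t - 1) + of_int (Fs t) * \<alpha>"
    unfolding pow_FG[OF alpha_sq, of t] by (simp add: algebra_simps)
  show ?thesis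
  proof (cases "\<exists>c. int p dvd c * c - a1 * c - 1")
    case True
    then obtain c1 where "int p dvd c1 * c1 - a1 * c1 - 1" by blast
    then obtain c0 where c0: "int p dvd c0 * c0 - a1 * c0 - 1" "\<alpha> - of_int c0 \<in> P"
      using split_root[OF PP lo] by blast
    obtain c where c: "int p ^ v dvd c * c - a1 * c - 1" "int p dvd c - c0"
      using hensel[OF p c0(1) nd_of_root[OF c0(1) pD p]] by blast
    have "int p dvd c0 - c" using c(2) by (metis dvd_minus_iff minus_diff_eq)
    then have "of_int (c0 - c) \<in> P" using int_in_P[OF lo] by blast
    then have "(\<alpha> - of_int c0) + of_int (c0 - c) \<in> P" using P_ideal_ops(1)[OF PP c0(2)] by blast
    then have ac: "\<alpha> - of_int c \<in> P" by simp
    have pk: "int p ^ k dvd c * c - a1 * c - 1" if "k \<le> v" for k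
      using dvd_trans[OF le_imp_power_dvd[OF that] c(1)] .
    have sub: "I \<subseteq> Jsp p v c" unfolding I_def
    proof (rule pow_sub)
      fix k assume "k \<le> v" then show "is_ideal a1 (Jsp p k c)" using Jsp_ideal[OF p pD pk] by blast
    next
      show "OK a1 \<subseteq> Jsp p 0 c" unfolding Jsp_def using rep_p[OF _ pD] by auto
    next
      fix k y z assume k: "k < v" and y: "y \<in> P" and z: "z \<in> Jsp p k c"
      have "y \<in> Jsp p 1 c" using P_sub_Jsp[OF p pD PP lo ac] y by blast
      then show "y * z \<in> Jsp p (Suc k) c" using Jsp_prod[OF p pk[of "Suc k"] _ z] k by simp
    qed
    have "of_int (Gs t - 1) + of_int (Fs t) * \<alpha> \<in> Jsp p v c" using mem at sub by auto
    then have d1: "m dvd (Gs t - 1) + Fs t * c" unfolding m_def by (rule Jsp_extract[OF p])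
    have bO: "\<beta> \<in> OK a1" unfolding \<beta>_def using OK_lin[of a1 "-1"] by simp
    have "(\<alpha> * \<beta>) ^ t = 1" using ev alpha_beta by simp
    then have "\<beta> ^ t - 1 = (- (\<beta> ^ t)) * (\<alpha> ^ t - 1)" by (simp add: algebra_simps power_mult_distrib)
    moreover have "- (\<beta> ^ t) \<in> OK a1" using OK_neg[OF OK_pow[OF bO]] .
    ultimately have "\<beta> ^ t - 1 \<in> I" using pow_mult[of "- (\<beta> ^ t)" "\<alpha> ^ t - 1" P v] mem unfolding I_def by simp
    moreover have "\<beta> ^ t - 1 = of_int (a1 * Fs t + Gs t - 1) + of_int (- Fs t) * \<alpha>"
    proof -
      have "\<beta> ^ t - 1 = of_int (Fs t) * \<beta> + of_int (Gs t) - 1" using pow_FG[OF beta_sq, of t] by simp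
      also have "\<dots> = of_int (a1 * Fs t + Gs t - 1) + of_int (- Fs t) * \<alpha>" unfolding \<beta>_def by (simp add: algebra_simps)
      finally show ?thesis .
    qed
    ultimately have "of_int (a1 * Fs t + Gs t - 1) + of_int (- Fs t) * \<alpha> \<in> Jsp p v c" using sub by auto
    then have d2: "m dvd (a1 * Fs t + Gs t - 1) + (- Fs t) * c" unfolding m_def by (rule Jsp_extract[OF p])
    have eq: "(2 * c - a1) * Fs t = ((Gs t - 1) + Fs t * c) - ((a1 * Fs t + Gs t - 1) + (- Fs t) * c)"
      by (simp add: algebra_simps)
    have "m dvd (2 * c - a1) * Fs t" unfolding eq by (rule dvd_diff[OF d1 d2])
    moreover have "int p dvd c * c - a1 * c - 1" using pk[of 1] v by simp
    then have "\<not> int p dvd 2 * c - a1" using nd_of_root pD p by blast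
    ultimately have F: "m dvd Fs t" unfolding m_def using coprime_pk[OF p] by blast
    have "Gs t - 1 = ((Gs t - 1) + Fs t * c) - Fs t * c" by simp
    moreover have "m dvd ((Gs t - 1) + Fs t * c) - Fs t * c" by (rule dvd_diff[OF d1 dvd_mult2[OF F]])
    ultimately have "m dvd Gs t - 1" by simp
    then show ?thesis using F by blast
  next
    case False
    then have inert: "\<And>c. \<not> int p dvd c * c - a1 * c - 1" by blast
    have sub: "I \<subseteq> Jin p v" unfolding I_def
    proof (rule pow_sub)
      fix k show "is_ideal a1 (Jin p k)" using Jin_ideal[OF p pD] by blast
    next
      show "OK a1 \<subseteq> Jin p 0" unfolding Jin_def using rep_p[OF _ pD] by auto
    next
      fix k y z assume y: "y \<in> P" and z: "z \<in> Jin p k"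
      have "y \<in> Jin p 1" using P_sub_Jin[OF p pD PP lo inert] y by blast
      then show "y * z \<in> Jin p (Suc k)" using Jin_prod[OF p _ z] by simp
    qed
    have "of_int (Gs t - 1) + of_int (Fs t) * \<alpha> \<in> Jin p v" using mem at sub by auto
    then show ?thesis unfolding m_def using Jin_extract[OF p] by blast
  qed
qed

lemma main: "tau x m = 2 * ord_ideal I (\<alpha>^2)"
proof -
  define S where "S t \<longleftrightarrow> t \<ge> 1 \<and> m dvd Fs t \<and> m dvd Gs t - 1" for t
  have m0: "m > 0" unfolding m_def using p by (simp add: prime_gt_0_nat)
  have tauS: "tau x m = (LEAST t. S t)"
    unfolding tau_def S_def using period_iff by simp
  have ex: "\<exists>t. S t" unfolding S_def using period_exists[OF m0] by blast
  define t0 where "t0 = (LEAST t. S t)"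
  have St0: "S t0" unfolding t0_def using ex by (rule LeastI_ex)
  have "even t0" using St0 even_of unfolding S_def by blast
  then obtain s0 where s0: "t0 = 2 * s0" by blast
  have "(LEAST s. s \<ge> 1 \<and> (\<alpha>^2) ^ s - 1 \<in> I) = s0"
  proof (rule Least_equality)
    show "s0 \<ge> 1 \<and> (\<alpha>^2) ^ s0 - 1 \<in> I"
      using St0 s0 suff unfolding S_def by (simp add: power_mult[symmetric])
  next
    fix s assume s: "s \<ge> 1 \<and> (\<alpha>^2) ^ s - 1 \<in> I"
    then have "\<alpha> ^ (2 * s) - 1 \<in> I" by (simp add: power_mult)
    then have "S (2 * s)" using necc s unfolding S_def by simp
    then have "t0 \<le> 2 * s" unfolding t0_def by (rule Least_le)
    then show "s0 \<le> s" using s0 by simp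
  qed
  then have "ord_ideal I (\<alpha>^2) = s0" unfolding ord_ideal_def by simp
  then show ?thesis using tauS s0 t0_def by simp
qed

end

theorem mainTheorem10:
  fixes a1 :: int and x :: "nat \<Rightarrow> int" and p v :: nat and P :: "real set" and \<alpha> :: real
  assumes "a1 \<ge> 1"
    and "x \<in> Lf a1"
    and "\<alpha> \<in> OK a1" and "\<alpha>^2 - real_of_int a1 * \<alpha> - 1 = 0"
    and "prime p"
    and "\<not> int p dvd 2 * (x 1 ^ 2 - a1 * x 1 * x 0 - x 0 ^ 2) * discr a1"
    and "is_prime_ideal a1 P" and "lies_over P p"
    and "v \<ge> 1"
  shows "tau x (int p ^ v) = 2 * ord_ideal (ideal_pow a1 P v) (\<alpha>^2)"
proof -
  let ?Q = "x 1 * x 1 - a1 * x 1 * x 0 - x 0 * x 0"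
  have nd: "\<not> int p dvd 2 * ?Q * discr a1" using assms(6) by (simp add: power2_eq_square)
  have pD: "\<not> int p dvd 2 * discr a1"
  proof
    assume "int p dvd 2 * discr a1"
    then have "int p dvd ?Q * (2 * discr a1)" by (rule dvd_mult)
    then show False using nd by (simp add: ac_simps)
  qed
  have pQ: "\<not> int p dvd ?Q"
  proof
    assume "int p dvd ?Q"
    then have "int p dvd ?Q * (2 * discr a1)" by (rule dvd_mult2)
    then show False using nd by (simp add: ac_simps)
  qed
  have p2: "\<not> int p dvd 2"
  proof
    assume "int p dvd 2"
    then have "int p dvd 2 * (?Q * discr a1)" by (rule dvd_mult2)
    then show False using nd by (simp add: ac_simps)
  qed
  interpret qfm a1 \<alpha> p v P x
    by unfold_locales (use assms pD pQ p2 in auto)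
  show ?thesis using main unfolding m_def I_def .
qed

end
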